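(* Let $n\in\mathbb{Z}_{>0}$ and $m\in\mathbb{Z}_{\ge0}$. The map $\Phi=(\phi^{-1}\times\mathrm{id}_{\{0,1\}^n})\circ F\circ\phi$ is a bijection $\mathrm{SPP}(n,2m+1)\to\mathrm{eSPP}(n,m)\times\{0,1\}^n$, and its restriction to $\mathrm{SPP}(n,2m)\subseteq\mathrm{SPP}(n,2m+1)$ is a bijection from $\mathrm{SPP}(n,2m)$ onto $\{(\pi',t)\in\mathrm{eSPP}(n,m)\times\{0,1\}^n \mid t(j)=0 \text{ for all } j\notin S(\pi')\}$, i.e. onto $\bigsqcup_{\pi'\in\mathrm{eSPP}(n,m)}\{0,1\}^{S(\pi')}$.
   Context: $\mathrm{SPP}(n,M)$ is the set of shifted staircase plane partitions of size $n$ with $\pi_{1,1}\le M$: arrays $\pi=(\pi_{i,j})_{1\le i\le j\le n}$ of nonnegative integers, weakly decreasing along rows and columns where defined (these correspond to symmetric plane partitions). $\mathrm{eSPP}(n,m)=\{\pi\in\mathrm{SPP}(n,2m)\mid \pi_{i,i}\text{ even for all }i\}$, and for $\pi'\in\mathrm{eSPP}(n,m)$, $S(\pi')=\{1\le j\le n\mid \pi'_{1,j}\ne 2m\}$. Partitions have $n$ (possibly zero) parts; $\lambda\le\mu$ means $\lambda_i\le\mu_i$ for all $i$; $(k)^n=(k,\dots,k)$; $\lambda$ is even if all parts are even. $\mathrm{SSYT}(\lambda,n)$: semistandard tableaux of shape $\lambda$ with entries in $\{1,\dots,n\}$, weakly decreasing along rows and strictly decreasing down columns. The conjugation bijection $\phi\colon\mathrm{SPP}(n,M)\to\bigsqcup_{\lambda\le(M)^n}\mathrm{SSYT}(\lambda,n)$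 sends $\pi$ to the tableau of shape $(\pi_{1,1},\dots,\pi_{n,n})$ with entries $\phi(\pi)_{i,j}=\#\{i\le k\le n\mid \pi_{i,k}\ge j\}$; it maps $\mathrm{eSPP}(n,m)$ onto the tableaux of even shape $\lambda\le(2m)^n$. Row insertion $T\leftarrow x$: in the first row replace the leftmost entry $y$ strictly less than $x$ by $x$ and insert $y$ into the next row likewise; if no entry is less than $x$, append $x$ at the end of the row and stop. $F\colon\bigsqcup_{\mu\le(2m+1)^n}\mathrm{SSYT}(\mu,n)\to\bigsqcup_{\lambda\le(2m)^n\text{ even}}\mathrm{SSYT}(\lambda,n)\times\{0,1\}^n$ is defined by: for $(U,\mu)$ let $\lambda_i=2\lfloor\mu_i/2\rfloor$, let $T\in\mathrm{SSYT}(\lambda,n)$ and $x_1<\dots<x_p$ be the unique data with $U=(((T\leftarrow x_1)\leftarrow x_2)\leftarrow\cdots)\leftarrow x_p$ (unique since $\mu\setminus\lambda$ has at most one box per row), and $F(U,\mu)=((T,\lambda),t)$ with $t(i)=1$ iff $i\in\{x_1,\dots,x_p\}$. *)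

theory Defs
  imports Main
begin

definition SPP_all :: "nat \<Rightarrow> (nat \<Rightarrow> nat \<Rightarrow> nat) set" where
  "SPP_all n = {p.
     (\<forall>i j. p i j \<noteq> 0 \<longrightarrow> 1 \<le> i \<and> i \<le> j \<and> j \<le> n) \<and>
     (\<forall>i j. 1 \<le> i \<longrightarrow> i \<le> j \<longrightarrow> j < n \<longrightarrow> p i (Suc j) \<le> p i j) \<and>
     (\<forall>i j. 1 \<le> i \<longrightarrow> Suc i \<le> j \<longrightarrow> j \<le> n \<longrightarrow> p (Suc i) j \<le> p i j)}"

definition SPP :: "nat \<Rightarrow> nat \<Rightarrow> (nat \<Rightarrow> nat \<Rightarrow> nat) set" where
  "SPP n M = {p \<in> SPP_all n. p 1 1 \<le> M}"

definition eSPP :: "nat \<Rightarrow> nat \<Rightarrow> (nat \<Rightarrow> nat \<Rightarrow> nat) set" where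
  "eSPP n m = {p \<in> SPP n (2 * m). \<forall>i \<in> {1..n}. even (p i i)}"

definition S_set :: "nat \<Rightarrow> nat \<Rightarrow> (nat \<Rightarrow> nat \<Rightarrow> nat) \<Rightarrow> nat set" where
  "S_set n m p = {j \<in> {1..n}. p 1 j \<noteq> 2 * m}"

text \<open>{0,1}^n as functions on {1..n} with values in {0,1}, extended by 0.\<close>
definition binvecs :: "nat \<Rightarrow> (nat \<Rightarrow> nat) set" where
  "binvecs n = {t. \<forall>i. t i \<in> {0, 1} \<and> (t i \<noteq> 0 \<longrightarrow> 1 \<le> i \<and> i \<le> n)}"

text \<open>A tableau is a list of n rows; row i (1-based) is T!(i-1), and the
  shape is map length T.\<close>

definition is_partition :: "nat \<Rightarrow> nat list \<Rightarrow> bool" where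
  "is_partition n lam \<longleftrightarrow> length lam = n \<and> sorted_wrt (\<lambda>a b. b \<le> a) lam"

definition SSYT :: "nat list \<Rightarrow> nat \<Rightarrow> nat list list set" where
  "SSYT lam n = {T. is_partition n lam \<and> map length T = lam \<and>
     (\<forall>r \<in> set T. \<forall>x \<in> set r. 1 \<le> x \<and> x \<le> n) \<and>
     (\<forall>r \<in> set T. sorted_wrt (\<lambda>a b. b \<le> a) r) \<and>
     (\<forall>i j. Suc i < length T \<longrightarrow> j < length (T ! Suc i) \<longrightarrow>
            T ! Suc i ! j < T ! i ! j)}"

definition phi :: "nat \<Rightarrow> (nat \<Rightarrow> nat \<Rightarrow> nat) \<Rightarrow> nat list list" where
  "phi n p = map (\<lambda>i. map (\<lambda>j. card {k. i \<le> k \<and> k \<le> n \<and> j \<le> p i k}) [1..<p i i + 1])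
                 [1..<n + 1]"

definition phi_inv :: "nat \<Rightarrow> nat list list \<Rightarrow> (nat \<Rightarrow> nat \<Rightarrow> nat)" where
  "phi_inv n = the_inv_into (SPP_all n) (phi n)"

fun row_ins :: "nat list list \<Rightarrow> nat \<Rightarrow> nat list list" where
  "row_ins [] x = [[x]]"
| "row_ins (r # rs) x =
     (if \<exists>y \<in> set r. y < x
      then (let k = (LEAST k. k < length r \<and> r ! k < x)
            in r[k := x] # row_ins rs (r ! k))
      else (r @ [x]) # rs)"

definition F_map :: "nat \<Rightarrow> nat list list \<Rightarrow> nat list list \<times> (nat \<Rightarrow> nat)" where
  "F_map n U =
     (let lam = map (\<lambda>a. 2 * (a div 2)) (map length U) in
      case (THE (T, xs). T \<in> SSYT lam n \<and> sorted_wrt (<) xs \<and> set xs \<subseteq> {1..n}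
                         \<and> foldl row_ins T xs = U) of
        (T, xs) \<Rightarrow> (T, \<lambda>i. if i \<in> set xs then 1 else 0))"

definition Phi :: "nat \<Rightarrow> (nat \<Rightarrow> nat \<Rightarrow> nat) \<Rightarrow> (nat \<Rightarrow> nat \<Rightarrow> nat) \<times> (nat \<Rightarrow> nat)" where
  "Phi n p = (case F_map n (phi n p) of (T, t) \<Rightarrow> (phi_inv n T, t))"

end

theory Submission
  imports Defs
begin

definition sdec :: "nat list \<Rightarrow> bool" where
  "sdec r \<longleftrightarrow> sorted_wrt (\<lambda>a b. b \<le> a) r"

definition cnt :: "nat \<Rightarrow> nat list \<Rightarrow> nat" where
  "cnt w r = length (filter (\<lambda>a. w \<le> a) r)"

lemma sdec_nth: "sdec r \<Longrightarrow> i \<le> j \<Longrightarrow> j < length r \<Longrightarrow> r ! j \<le> r ! i"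
  unfolding sdec_def sorted_wrt_iff_nth_less
  by (cases "i = j") auto

lemma sdecI: "(\<And>i j. i < j \<Longrightarrow> j < length r \<Longrightarrow> r ! j \<le> r ! i) \<Longrightarrow> sdec r"
  unfolding sdec_def sorted_wrt_iff_nth_less by auto

lemma cnt_Cons: "cnt w (a # r) = (if w \<le> a then Suc (cnt w r) else cnt w r)"
  by (simp add: cnt_def)

lemma sdec_Cons: "sdec (a # r) \<longleftrightarrow> (\<forall>b\<in>set r. b \<le> a) \<and> sdec r"
  by (simp add: sdec_def)

lemma cnt_less_iff: "sdec r \<Longrightarrow> j < cnt w r \<longleftrightarrow> j < length r \<and> w \<le> r ! j"
proof (induction r arbitrary: j)
  case Nil then show ?case by (simp add: cnt_def)
next
  case (Cons a r)
  have sr: "sdec r" and ab: "\<forall>b\<in>set r. b \<le> a" using Cons.prems by (auto simp: sdec_Cons)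
  show ?case
  proof (cases "w \<le> a")
    case True
    then show ?thesis using Cons.IH[OF sr] by (cases j) (auto simp: cnt_Cons)
  next
    case False
    have "cnt w r = 0" using ab False unfolding cnt_def by (auto simp: filter_empty_conv)
    moreover have "j < length (a#r) \<Longrightarrow> (a#r) ! j \<le> a" for j using ab by (cases j) auto
    ultimately show ?thesis using False by (auto simp: cnt_Cons) (meson le_trans)
  qed
qed

lemma cnt_le_length: "cnt w r \<le> length r"
  by (simp add: cnt_def)

lemma eq_by_less: "(\<And>j. j < (a::nat) \<longleftrightarrow> j < b) \<Longrightarrow> a = b"
  by (metis less_irrefl nat_neq_iff)

lemma cnt_mono: "w \<le> w' \<Longrightarrow> cnt w' r \<le> cnt w r"
  unfolding cnt_def by (induction r) auto

lemma cnt_1: "\<forall>a\<in>set r. 0 < a \<Longrightarrow> cnt (Suc 0) r = length r"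
  unfolding cnt_def by (induction r) auto

definition ins1 :: "nat list \<Rightarrow> nat \<Rightarrow> nat list \<times> nat option" where
  "ins1 r x = (if \<exists>y\<in>set r. y < x
      then (let k = (LEAST k. k < length r \<and> r ! k < x) in (r[k := x], Some (r ! k)))
      else (r @ [x], None))"

lemma row_ins_Cons: "row_ins (r # rs) x =
   (case ins1 r x of (r', None) \<Rightarrow> r' # rs | (r', Some y) \<Rightarrow> r' # row_ins rs y)"
  by (simp add: ins1_def Let_def)

lemma ex_less_iff: "sdec c \<Longrightarrow> (\<exists>y\<in>set c. y < x) \<longleftrightarrow> cnt x c < length c"
proof
  assume s: "sdec c"
  assume "\<exists>y\<in>set c. y < x"
  then obtain j where j: "j < length c" "c ! j < x" by (auto simp: in_set_conv_nth)
  then have "\<not> j < cnt x c" using cnt_less_iff[OF s] by auto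
  then show "cnt x c < length c" using j by auto
next
  assume s: "sdec c" and "cnt x c < length c"
  then have "c ! cnt x c < x" using cnt_less_iff[OF s, of "cnt x c" x] by auto
  then show "\<exists>y\<in>set c. y < x" using \<open>cnt x c < length c\<close> nth_mem by blast
qed

lemma ins1_eq: "sdec c \<Longrightarrow> ins1 c x = (if cnt x c < length c then (c[cnt x c := x], Some (c ! cnt x c)) else (c @ [x], None))"
proof -
  assume s: "sdec c"
  show ?thesis
  proof (cases "cnt x c < length c")
    case True
    have "(LEAST k. k < length c \<and> c ! k < x) = cnt x c"
    proof (rule Least_equality)
      show "cnt x c < length c \<and> c ! cnt x c < x" using True cnt_less_iff[OF s, of "cnt x c" x] by auto
      show "\<And>y. y < length c \<and> c ! y < x \<Longrightarrow> cnt x c \<le> y" using cnt_less_iff[OF s] by (meson leI not_le)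
    qed
    then show ?thesis using True ex_less_iff[OF s] by (simp add: ins1_def Let_def)
  next
    case False
    then show ?thesis using ex_less_iff[OF s] by (simp add: ins1_def)
  qed
qed

lemma ins1_bump_sdec: "sdec c \<Longrightarrow> k = cnt x c \<Longrightarrow> k < length c \<Longrightarrow> sdec (c[k := x])"
proof (rule sdecI)
  fix i j assume s: "sdec c" and k: "k = cnt x c" "k < length c" and ij: "i < j" "j < length (c[k := x])"
  have lt: "\<And>j. j < length c \<Longrightarrow> j < k \<longleftrightarrow> x \<le> c ! j" using cnt_less_iff[OF s] k by auto
  have ck: "c ! k < x" using lt[of k] k by auto
  show "c[k := x] ! j \<le> c[k := x] ! i"
    using ij lt[of i] lt[of j] sdec_nth[OF s, of i j] sdec_nth[OF s, of k j] ck
    by (auto simp: nth_list_update)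
qed

lemma ins1_app_sdec: "sdec c \<Longrightarrow> \<not> cnt x c < length c \<Longrightarrow> sdec (c @ [x])"
proof -
  assume s: "sdec c" and n: "\<not> cnt x c < length c"
  have "\<forall>a\<in>set c. x \<le> a"
  proof
    fix a assume "a \<in> set c"
    then obtain j where "j < length c" "a = c ! j" by (auto simp: in_set_conv_nth)
    then show "x \<le> a" using n cnt_less_iff[OF s, of j x] cnt_le_length[of x c] by auto
  qed
  then show ?thesis using s by (simp add: sdec_def sorted_wrt_append)
qed

lemma ins1_sdec: "sdec c \<Longrightarrow> sdec (fst (ins1 c x))"
  using ins1_bump_sdec ins1_app_sdec by (simp add: ins1_eq)

definition stepM :: "nat list \<times> nat list \<Rightarrow> nat \<Rightarrow> nat list \<times> nat list" where
  "stepM st x = (case st of (c, ys) \<Rightarrow> (case ins1 c x of (c', None) \<Rightarrow> (c', ys) | (c', Some y) \<Rightarrow> (c', ys @ [y])))"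

definition rowM :: "nat list \<Rightarrow> nat list \<Rightarrow> nat list \<times> nat list" where
  "rowM r xs = foldl stepM (r, []) xs"

lemma rowM_Nil[simp]: "rowM r [] = (r, [])"
  by (simp add: rowM_def)

lemma rowM_snoc: "rowM r (xs @ [x]) = stepM (rowM r xs) x"
  by (simp add: rowM_def)

lemma G_Cons: "foldl row_ins (r # rs) xs = fst (rowM r xs) # foldl row_ins rs (snd (rowM r xs))"
proof (induction xs rule: rev_induct)
  case Nil then show ?case by simp
next
  case (snoc x xs)
  obtain c ys where cy: "rowM r xs = (c, ys)" by fastforce
  obtain c' oy where co: "ins1 c x = (c', oy)" by fastforce
  show ?case using snoc cy co
    by (cases oy) (simp_all add: rowM_snoc stepM_def row_ins_Cons del: row_ins.simps)
qed

lemma G_Nil_Nil[simp]: "foldl row_ins [] [] = []" by simp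

lemma row_ins_ne: "row_ins T x \<noteq> []"
  by (cases T) (auto simp: Let_def)

lemma foldl_row_ins_ne: "T \<noteq> [] \<Longrightarrow> foldl row_ins T xs \<noteq> []"
  by (induction xs arbitrary: T) (auto simp: row_ins_ne)

lemma G_Nil_iff: "foldl row_ins [] xs = [] \<longleftrightarrow> xs = []"
  by (cases xs) (auto simp: foldl_row_ins_ne row_ins_ne)

definition grows :: "nat list \<Rightarrow> nat list \<Rightarrow> bool" where
  "grows r xs \<longleftrightarrow> xs \<noteq> [] \<and> (\<forall>a\<in>set r. hd xs \<le> a)"

lemma grows_iff_cnt: "sdec r \<Longrightarrow> (\<forall>a\<in>set r. x \<le> a) \<longleftrightarrow> \<not> cnt x r < length r"
  using ex_less_iff[of r x] by (auto simp: not_less)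

lemma sorted_snoc_less: "sorted_wrt (<) (xs @ [x]) \<longleftrightarrow> sorted_wrt (<) xs \<and> (\<forall>a\<in>set xs. a < x)"
  by (simp add: sorted_wrt_append)

lemma rowM_inc:
  assumes "sdec r" "sorted_wrt (<) xs" "rowM r xs = (c, ys)"
  shows "sdec c \<and> sorted_wrt (<) ys \<and> (xs \<noteq> [] \<longrightarrow> last xs \<in> set c \<and> (\<forall>y\<in>set ys. y < last xs))
    \<and> length c = length r + (if grows r xs then 1 else 0)
    \<and> length ys + (if grows r xs then 1 else 0) = length xs
    \<and> set c \<subseteq> set r \<union> set xs \<and> set ys \<subseteq> set r \<union> set xs"
  using assms(2,3)
proof (induction xs arbitrary: c ys rule: rev_induct)
  case Nil then show ?case using assms(1) by (simp add: grows_def)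
next
  case (snoc x xs)
  obtain c0 ys0 where cy: "rowM r xs = (c0, ys0)" by fastforce
  have sx: "sorted_wrt (<) xs" and xl: "\<forall>a\<in>set xs. a < x" using snoc.prems(1) sorted_snoc_less by auto
  note IH = snoc.IH[OF sx cy]
  have sc0: "sdec c0" using IH by auto
  show ?case
  proof (cases "xs = []")
    case True
    then have c0: "c0 = r" "ys0 = []" using cy by auto
    show ?thesis
    proof (cases "cnt x r < length r")
      case T: True
      have e: "c = r[cnt x r := x]" "ys = [r ! cnt x r]"
        using snoc.prems(2) cy c0 True T by (auto simp: rowM_def stepM_def ins1_eq[OF assms(1)])
      have lt: "r ! cnt x r < x" using cnt_less_iff[OF assms(1), of "cnt x r" x] T by auto
      have ng: "\<not> grows r [x]" using grows_iff_cnt[OF assms(1)] T by (simp add: grows_def)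
      show ?thesis using e True T lt ng ins1_bump_sdec[OF assms(1) refl T] set_update_subset_insert[of r "cnt x r" x]
        by (auto simp: set_update_memI)
    next
      case F: False
      have e: "c = r @ [x]" "ys = []"
        using snoc.prems(2) cy c0 True F by (auto simp: rowM_def stepM_def ins1_eq[OF assms(1)])
      have g: "grows r [x]" using grows_iff_cnt[OF assms(1)] F by (simp add: grows_def)
      show ?thesis using e True g ins1_app_sdec[OF assms(1) F] by auto
    qed
  next
    case False
    have lx: "last xs \<in> set c0" and ly: "\<forall>y\<in>set ys0. y < last xs" using IH False by auto
    have lxx: "last xs < x" using xl False by auto
    then have ex: "\<exists>y\<in>set c0. y < x" using lx by auto
    then have T: "cnt x c0 < length c0" using ex_less_iff[OF sc0] by auto
    define k where "k = cnt x c0"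
    have e: "c = c0[k := x]" "ys = ys0 @ [c0 ! k]"
      using snoc.prems(2) cy T by (auto simp: rowM_snoc stepM_def ins1_eq[OF sc0] k_def)
    have lt: "c0 ! k < x" using cnt_less_iff[OF sc0, of k x] T k_def by auto
    obtain j where j: "j < length c0" "c0 ! j = last xs" using lx by (auto simp: in_set_conv_nth)
    have "k \<le> j" using cnt_less_iff[OF sc0, of j x] j lxx k_def by auto
    then have ge: "last xs \<le> c0 ! k" using sdec_nth[OF sc0, of k j] j by auto
    have gg: "grows r (xs @ [x]) = grows r xs" using False by (simp add: grows_def)
    have sys: "sorted_wrt (<) ys" using IH e ly ge by (auto simp: sorted_snoc_less)
    have c0k: "c0 ! k \<in> set c0" using T k_def by simp
    have l1: "length c = length c0" using e by simp
    have s1: "set c \<subseteq> insert x (set c0)" using e set_update_subset_insert by metis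
    have m1: "x \<in> set c" using e T k_def by (simp add: set_update_memI)
    have yl: "\<forall>y\<in>set ys. y < x" using e ly lxx lt by auto
    have sd: "sdec c" using e ins1_bump_sdec[OF sc0 refl T] k_def by simp
    have "set c \<subseteq> set r \<union> set (xs @ [x])" using s1 IH by auto
    moreover have "set ys \<subseteq> set r \<union> set (xs @ [x])" using e c0k IH by auto
    moreover have "length c = length r + (if grows r (xs @ [x]) then 1 else 0)" using l1 IH gg by simp
    moreover have "length ys + (if grows r (xs @ [x]) then 1 else 0) = length (xs @ [x])" using e IH gg by simp
    ultimately show ?thesis using sd sys m1 yl by simp
  qed
qed

definition colstrict :: "nat list \<Rightarrow> nat list \<Rightarrow> bool" where
  "colstrict r s \<longleftrightarrow> length s \<le> length r \<and> (\<forall>j<length s. s ! j < r ! j)"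

lemma fst_stepM: "fst (stepM st x) = fst (ins1 (fst st) x)"
  by (auto simp: stepM_def split: prod.splits option.splits)

lemma rowM_sdec: "sdec r \<Longrightarrow> sdec (fst (rowM r xs))"
  by (induction xs rule: rev_induct) (auto simp: rowM_snoc fst_stepM ins1_sdec)

lemma step_fwd_bump:
  assumes sr: "sdec cr" and ss: "sdec cs" and cs: "colstrict cr cs"
    and k: "k = cnt x cr" "k < length cr"
  shows "colstrict (cr[k := x]) (fst (ins1 cs (cr ! k)))"
proof -
  define y where "y = cr ! k"
  define k' where "k' = cnt y cs"
  have Lr: "\<And>j. j < length cr \<Longrightarrow> j < k \<longleftrightarrow> x \<le> cr ! j" using cnt_less_iff[OF sr] k by auto
  have Ls: "\<And>j. j < length cs \<Longrightarrow> j < k' \<longleftrightarrow> y \<le> cs ! j" using cnt_less_iff[OF ss] k'_def by auto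
  have yx: "y < x" using Lr[of k] k y_def by auto
  have k'le: "k' \<le> length cs" using k'_def cnt_le_length by simp
  have kk: "k' \<le> k"
  proof (cases "k < length cs")
    case True
    then have "cs ! k < y" using cs y_def unfolding colstrict_def by auto
    then show ?thesis using Ls[of k] True by (meson leI not_le)
  next
    case False then show ?thesis using k'le by simp
  qed
  show ?thesis
  proof (cases "k' < length cs")
    case True
    have e: "fst (ins1 cs y) = cs[k' := y]" using True by (simp add: ins1_eq[OF ss] k'_def)
    show ?thesis unfolding e y_def[symmetric] colstrict_def
    proof (intro conjI allI impI)
      show "length (cs[k' := y]) \<le> length (cr[k := x])" using cs by (simp add: colstrict_def)
      fix j assume j: "j < length (cs[k' := y])"
      show "cs[k' := y] ! j < cr[k := x] ! j"
      proof (cases "j = k'")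
        case True
        then show ?thesis using kk yx Lr[of k'] j k cs unfolding colstrict_def
          by (cases "k' = k") (auto simp: nth_list_update)
      next
        case False
        then show ?thesis using j cs yx y_def kk unfolding colstrict_def
          by (cases "j = k") (auto simp: nth_list_update)
      qed
    qed
  next
    case False
    then have kl: "k' = length cs" using k'le by simp
    have e: "fst (ins1 cs y) = cs @ [y]" using False by (simp add: ins1_eq[OF ss] k'_def)
    show ?thesis unfolding e y_def[symmetric] colstrict_def
    proof (intro conjI allI impI)
      show "length (cs @ [y]) \<le> length (cr[k := x])" using kk kl k by simp
      fix j assume j: "j < length (cs @ [y])"
      show "(cs @ [y]) ! j < cr[k := x] ! j"
      proof (cases "j = length cs")
        case True
        then show ?thesis using kk yx Lr[of j] kl k
          by (cases "j = k") (auto simp: nth_list_update nth_append)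
      next
        case False
        then have "j < length cs" using j by simp
        then show ?thesis using cs yx y_def kk kl unfolding colstrict_def
          by (auto simp: nth_list_update nth_append)
      qed
    qed
  qed
qed

lemma step_fwd:
  assumes sr: "sdec cr" and ss: "sdec cs" and cs: "colstrict cr cs"
  shows "colstrict (fst (ins1 cr x)) (case snd (ins1 cr x) of None \<Rightarrow> cs | Some y \<Rightarrow> fst (ins1 cs y))"
proof (cases "cnt x cr < length cr")
  case True
  then show ?thesis using step_fwd_bump[OF assms refl True] by (simp add: ins1_eq[OF sr])
next
  case False
  then show ?thesis using cs by (auto simp: ins1_eq[OF sr] colstrict_def nth_append)
qed

lemma pair_fwd:
  assumes "sdec r" "sdec s" "colstrict r s"
  shows "colstrict (fst (rowM r xs)) (fst (rowM s (snd (rowM r xs))))"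
proof (induction xs rule: rev_induct)
  case Nil then show ?case using assms by simp
next
  case (snoc x xs)
  obtain c ys where cy: "rowM r xs = (c, ys)" by fastforce
  have sc: "sdec c" using rowM_sdec[OF assms(1), of xs] cy by simp
  have sd: "sdec (fst (rowM s ys))" using rowM_sdec[OF assms(2)] by simp
  have IH: "colstrict c (fst (rowM s ys))" using snoc cy by simp
  obtain c' oy where co: "ins1 c x = (c', oy)" by fastforce
  show ?case
  proof (cases oy)
    case None
    then have "rowM r (xs @ [x]) = (c', ys)" by (simp add: rowM_snoc stepM_def cy co)
    then show ?thesis using step_fwd[OF sc sd IH, of x] co None by simp
  next
    case (Some a)
    then have "rowM r (xs @ [x]) = (c', ys @ [a])" by (simp add: rowM_snoc stepM_def cy co)
    moreover have "fst (rowM s (ys @ [a])) = fst (ins1 (fst (rowM s ys)) a)" by (simp add: rowM_snoc fst_stepM)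
    ultimately show ?thesis using step_fwd[OF sc sd IH, of x] co Some by simp
  qed
qed

lemma step_rev_bump:
  assumes sr: "sdec cr" and ss: "sdec cs" and k: "k = cnt x cr" "k < length cr"
    and cs: "colstrict (cr[k := x]) (fst (ins1 cs (cr ! k)))"
  shows "colstrict cr cs"
proof -
  define y where "y = cr ! k"
  define k' where "k' = cnt y cs"
  define cs' where "cs' = fst (ins1 cs y)"
  have Lr: "\<And>j. j < length cr \<Longrightarrow> j < k \<longleftrightarrow> x \<le> cr ! j" using cnt_less_iff[OF sr] k by auto
  have Ls: "\<And>j. j < length cs \<Longrightarrow> j < k' \<longleftrightarrow> y \<le> cs ! j" using cnt_less_iff[OF ss] k'_def by auto
  have yx: "y < x" using Lr[of k] k y_def by auto
  have k'le: "k' \<le> length cs" using k'_def cnt_le_length by simp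
  have P: "k' < length cs' \<and> cs' ! k' = y \<and> length cs \<le> length cs' \<and> (\<forall>j<length cs. j \<noteq> k' \<longrightarrow> cs' ! j = cs ! j)"
    unfolding cs'_def using k'le by (auto simp: ins1_eq[OF ss] k'_def[symmetric] nth_list_update nth_append)
  have cs2: "length cs' \<le> length cr" "\<And>j. j < length cs' \<Longrightarrow> cs' ! j < cr[k := x] ! j"
    using cs unfolding colstrict_def cs'_def y_def by auto
  have kk: "k' \<le> k"
  proof (rule ccontr)
    assume "\<not> k' \<le> k"
    then have "k < k'" by simp
    moreover have "k' < length cr" using P cs2 by simp
    ultimately have "cr ! k' \<le> y" using sdec_nth[OF sr, of k k'] y_def by simp
    moreover have "y < cr[k := x] ! k'" using cs2(2)[of k'] P by simp
    ultimately show False using \<open>k < k'\<close> by simp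
  qed
  show ?thesis unfolding colstrict_def
  proof (intro conjI allI impI)
    show "length cs \<le> length cr" using P cs2 by simp
    fix j assume j: "j < length cs"
    have jr: "j < length cr" using j P cs2 by simp
    show "cs ! j < cr ! j"
    proof (cases "k' \<le> j \<and> j \<le> k")
      case True
      then have "cs ! j < y" using Ls[OF j] by simp
      moreover have "y \<le> cr ! j" using sdec_nth[OF sr, of j k] True k y_def by simp
      ultimately show ?thesis by simp
    next
      case False
      then have "j \<noteq> k'" "j \<noteq> k" using kk by auto
      then show ?thesis using P cs2(2)[of j] j by (simp add: nth_list_update)
    qed
  qed
qed

lemma pair_rev:
  assumes "sdec r" "sdec s" "sorted_wrt (<) xs" "length s \<le> length r"
    and "colstrict (fst (rowM r xs)) (fst (rowM s (snd (rowM r xs))))"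
  shows "colstrict r s"
  using assms(3,5)
proof (induction xs rule: rev_induct)
  case Nil then show ?case by simp
next
  case (snoc x xs)
  obtain c ys where cy: "rowM r xs = (c, ys)" by fastforce
  have sx: "sorted_wrt (<) xs" and xl: "\<forall>a\<in>set xs. a < x" using snoc.prems(1) sorted_snoc_less by auto
  have inc: "xs \<noteq> [] \<longrightarrow> last xs \<in> set c" using rowM_inc[OF assms(1) sx cy] by simp
  have sc: "sdec c" using rowM_sdec[OF assms(1), of xs] cy by simp
  have sd: "sdec (fst (rowM s ys))" using rowM_sdec[OF assms(2)] by simp
  show ?case
  proof (cases "cnt x c < length c")
    case True
    have e: "rowM r (xs @ [x]) = (c[cnt x c := x], ys @ [c ! cnt x c])"
      using True by (simp add: rowM_snoc stepM_def cy ins1_eq[OF sc])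
    have "fst (rowM s (ys @ [c ! cnt x c])) = fst (ins1 (fst (rowM s ys)) (c ! cnt x c))" by (simp add: rowM_snoc fst_stepM)
    then have "colstrict c (fst (rowM s ys))"
      using step_rev_bump[OF sc sd refl True] snoc.prems(2) e by simp
    then show ?thesis using snoc.IH[OF sx] cy by simp
  next
    case False
    have "xs = []"
    proof (rule ccontr)
      assume "xs \<noteq> []"
      then have "last xs \<in> set c" "last xs < x" using inc xl by auto
      then show False using False ex_less_iff[OF sc] by auto
    qed
    then have "c = r" "ys = []" using cy by auto
    then have "rowM r (xs @ [x]) = (r @ [x], [])"
      using False \<open>xs = []\<close> by (simp add: rowM_def stepM_def ins1_eq[OF assms(1)])
    then show ?thesis using snoc.prems(2) assms(4) by (auto simp: colstrict_def nth_append)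
  qed
qed

definition ub :: "nat list \<Rightarrow> nat \<Rightarrow> nat list \<times> nat" where
  "ub u y = (let k = cnt (Suc y) u - 1 in (u[k := y], u ! k))"

lemma ub_ins1:
  assumes sc: "sdec c" and k: "k = cnt x c" "k < length c"
  shows "ub (c[k := x]) (c ! k) = (c, x)"
proof -
  define u where "u = c[k := x]"
  define y where "y = c ! k"
  have su: "sdec u" using ins1_bump_sdec[OF sc k] u_def by simp
  have Lc: "\<And>j. j < length c \<Longrightarrow> j < k \<longleftrightarrow> x \<le> c ! j" using cnt_less_iff[OF sc] k by auto
  have yx: "y < x" using Lc[of k] k y_def by auto
  have "cnt (Suc y) u = Suc k"
  proof (rule eq_by_less)
    fix j
    show "j < cnt (Suc y) u \<longleftrightarrow> j < Suc k"
    proof (cases "j < length c")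
      case True
      have "j < length u \<and> Suc y \<le> u ! j \<longleftrightarrow> j < Suc k"
      proof (cases "j \<le> k")
        case True
        then show ?thesis using Lc[of j] yx \<open>j < length c\<close> u_def
          by (cases "j = k") (auto simp: nth_list_update)
      next
        case False
        then have "c ! j \<le> y" using sdec_nth[OF sc, of k j] \<open>j < length c\<close> y_def by simp
        then show ?thesis using False u_def by (auto simp: nth_list_update)
      qed
      then show ?thesis using cnt_less_iff[OF su] by simp
    next
      case False
      then show ?thesis using cnt_less_iff[OF su, of j "Suc y"] u_def k by auto
    qed
  qed
  then have "ub u y = (u[k := y], u ! k)" by (simp add: ub_def)
  also have "\<dots> = (c, x)" using u_def y_def k by simp
  finally show ?thesis using u_def y_def by simp
qed

lemma ins1_ub:
  assumes su: "sdec u" and ne: "u \<noteq> []" and yh: "y < hd u" and e: "ub u y = (c, x)"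
  shows "sdec c \<and> ins1 c x = (u, Some y) \<and> y < x \<and> y \<in> set c \<and> length c = length u
     \<and> set c \<subseteq> insert y (set u) \<and> x \<in> set u \<and> (\<forall>z\<in>set u. y < z \<longrightarrow> x \<le> z)"
proof -
  define k where "k = cnt (Suc y) u - 1"
  have c0: "0 < cnt (Suc y) u" using cnt_less_iff[OF su, of 0 "Suc y"] ne yh by (simp add: hd_conv_nth)
  have kc: "Suc k = cnt (Suc y) u" using c0 k_def by simp
  have kl: "k < length u" using kc cnt_le_length[of "Suc y" u] by simp
  have Lu: "\<And>j. j < length u \<Longrightarrow> j \<le> k \<longleftrightarrow> y < u ! j" using cnt_less_iff[OF su, of _ "Suc y"] kc
    by (metis Suc_le_eq less_Suc_eq_le)
  have ce: "c = u[k := y]" and xe: "x = u ! k" using e by (auto simp: ub_def k_def Let_def)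
  have yx: "y < x" using Lu[OF kl] xe by simp
  have sdc: "sdec c"
  proof (rule sdecI)
    fix i j assume ij: "i < j" "j < length c"
    then have jl: "j < length u" using ce by simp
    show "c ! j \<le> c ! i"
    proof (cases "j \<le> k")
      case True
      then show ?thesis using ij Lu[of i] jl ce sdec_nth[OF su, of i j]
        by (cases "j = k") (auto simp: nth_list_update)
    next
      case False
      then have "u ! j \<le> y" using Lu[OF jl] by simp
      then show ?thesis using ij ce sdec_nth[OF su, of i j] False
        by (cases "i = k") (auto simp: nth_list_update)
    qed
  qed
  have cx: "cnt x c = k"
  proof (rule eq_by_less)
    fix j
    show "j < cnt x c \<longleftrightarrow> j < k"
    proof (cases "j < length u")
      case True
      have "x \<le> c ! j \<longleftrightarrow> j < k"
      proof (cases "j < k")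
        case True
        then show ?thesis using sdec_nth[OF su, of j k] kl xe ce by (simp add: nth_list_update)
      next
        case False
        then show ?thesis using Lu[OF \<open>j < length u\<close>] yx ce xe kl
          by (cases "j = k") (auto simp: nth_list_update)
      qed
      then show ?thesis using cnt_less_iff[OF sdc] True ce by simp
    next
      case False
      then show ?thesis using cnt_less_iff[OF sdc, of j x] ce kl by auto
    qed
  qed
  have "ins1 c x = (c[k := x], Some (c ! k))" using cx kl ce ins1_eq[OF sdc, of x] by simp
  also have "\<dots> = (u, Some y)" using ce xe kl by simp
  finally have i1: "ins1 c x = (u, Some y)" .
  have m: "\<forall>z\<in>set u. y < z \<longrightarrow> x \<le> z"
  proof (intro ballI impI)
    fix z assume "z \<in> set u" "y < z"
    then obtain j where j: "j < length u" "z = u ! j" by (auto simp: in_set_conv_nth)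
    then have "j \<le> k" using Lu \<open>y < z\<close> by simp
    then show "x \<le> z" using sdec_nth[OF su, of j k] kl xe j by simp
  qed
  show ?thesis using sdc i1 yx m ce xe kl set_update_subset_insert[of u k y]
    by (simp add: set_update_memI)
qed

primrec unrowR :: "nat list \<Rightarrow> nat list \<Rightarrow> bool \<Rightarrow> nat list \<times> nat list" where
  "unrowR u [] g = (if g then (butlast u, [last u]) else (u, []))"
| "unrowR u (y # ys) g = (case ub u y of (c, x) \<Rightarrow> (case unrowR c ys g of (r, xs) \<Rightarrow> (r, xs @ [x])))"

definition unrow :: "nat list \<Rightarrow> nat list \<Rightarrow> bool \<Rightarrow> nat list \<times> nat list" where
  "unrow u ys g = unrowR u (rev ys) g"

lemma unrow_Nil: "unrow u [] g = (if g then (butlast u, [last u]) else (u, []))"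
  by (simp add: unrow_def)

lemma unrow_snoc: "unrow u (ys @ [y]) g = (case ub u y of (c, x) \<Rightarrow> (case unrow c ys g of (r, xs) \<Rightarrow> (r, xs @ [x])))"
  by (simp add: unrow_def)

lemma sdec_butlast_last:
  assumes "sdec u" "u \<noteq> []"
  shows "sdec (butlast u) \<and> (\<forall>a\<in>set u. last u \<le> a)"
proof -
  have e: "u = butlast u @ [last u]" using assms(2) by simp
  have "sorted_wrt (\<lambda>a b. b \<le> a) (butlast u @ [last u])" using assms(1) e unfolding sdec_def by metis
  then have "sdec (butlast u) \<and> (\<forall>a\<in>set (butlast u). last u \<le> a)" by (simp add: sorted_wrt_append sdec_def)
  moreover have "set u = insert (last u) (set (butlast u))" using e by (metis Un_insert_right append_Nil2 list.set(2) set_append sup_commute)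
  ultimately show ?thesis by auto
qed

lemma sdec_hd: "sdec u \<Longrightarrow> z \<in> set u \<Longrightarrow> z \<le> hd u"
  by (metis hd_conv_nth in_set_conv_nth le0 length_greater_0_conv list.size(3) not_less0 sdec_nth)

lemma unrow_RU:
  assumes "sdec u" "sorted_wrt (<) ys" "ys \<noteq> [] \<Longrightarrow> u \<noteq> [] \<and> last ys < hd u" "g \<Longrightarrow> u \<noteq> []"
    "unrow u ys g = (r, xs)"
  shows "sdec r \<and> sorted_wrt (<) xs \<and> rowM r xs = (u, ys) \<and> length r + (if g then 1 else 0) = length u
    \<and> set r \<subseteq> set u \<union> set ys \<and> set xs \<subseteq> set u \<union> set ys
    \<and> (\<forall>a\<in>set xs. \<forall>z\<in>set u. (ys = [] \<or> last ys < z) \<longrightarrow> a \<le> z)"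
  using assms
proof (induction ys arbitrary: u r xs rule: rev_induct)
  case Nil
  show ?case
  proof (cases g)
    case True
    then have ne: "u \<noteq> []" using Nil by simp
    note bl = sdec_butlast_last[OF Nil.prems(1) ne]
    have e: "r = butlast u" "xs = [last u]" using Nil.prems(5) True by (auto simp: unrow_Nil)
    have "\<not> cnt (last u) (butlast u) < length (butlast u)"
      using grows_iff_cnt[of "butlast u" "last u"] bl by (simp add: in_set_butlastD)
    then have "rowM (butlast u) [last u] = (u, [])" using ne
      by (simp add: rowM_def stepM_def ins1_eq[OF bl[THEN conjunct1]])
    then show ?thesis using e bl True ne by (auto simp: in_set_butlastD)
  next
    case False
    then show ?thesis using Nil by (auto simp: unrow_Nil)
  qed
next
  case (snoc y ys)
  obtain c x where cx: "ub u y = (c, x)" by fastforce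
  obtain r0 xs0 where rx: "unrow c ys g = (r0, xs0)" by fastforce
  have e: "r = r0" "xs = xs0 @ [x]" using snoc.prems(5) cx rx by (auto simp: unrow_snoc)
  have ne: "u \<noteq> []" and yh: "y < hd u" using snoc.prems(3) by auto
  note U = ins1_ub[OF snoc.prems(1) ne yh cx]
  have sys: "sorted_wrt (<) ys" and yl: "\<forall>a\<in>set ys. a < y" using snoc.prems(2) sorted_snoc_less by auto
  have pre3: "ys \<noteq> [] \<Longrightarrow> c \<noteq> [] \<and> last ys < hd c"
  proof -
    assume "ys \<noteq> []"
    moreover have "y \<le> hd c" using sdec_hd U by blast
    moreover have "last ys < y" using yl \<open>ys \<noteq> []\<close> by simp
    ultimately show ?thesis using U by auto
  qed
  have pre4: "g \<Longrightarrow> c \<noteq> []" using U by auto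
  have IH1: "sdec r0 \<and> sorted_wrt (<) xs0 \<and> rowM r0 xs0 = (c, ys) \<and> length r0 + (if g then 1 else 0) = length c
    \<and> set r0 \<subseteq> set c \<union> set ys \<and> set xs0 \<subseteq> set c \<union> set ys
    \<and> (\<forall>a\<in>set xs0. \<forall>z\<in>set c. (ys = [] \<or> last ys < z) \<longrightarrow> a \<le> z)"
    using snoc.IH[OF _ sys pre3 pre4 rx] U by blast
  have sr0: "sdec r0" using IH1 by blast
  have sx0: "sorted_wrt (<) xs0" using IH1 by blast
  have rm0: "rowM r0 xs0 = (c, ys)" using IH1 by blast
  have ln0: "length r0 + (if g then 1 else 0) = length c" using IH1 by blast
  have st1: "set r0 \<subseteq> set c \<union> set ys" using IH1 by blast
  have st2: "set xs0 \<subseteq> set c \<union> set ys" using IH1 by blast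
  have bd0: "\<forall>a\<in>set xs0. \<forall>z\<in>set c. (ys = [] \<or> last ys < z) \<longrightarrow> a \<le> z" using IH1 by blast
  have yc: "y \<in> set c" using U by blast
  have "ys = [] \<or> last ys < y" using yl last_in_set by blast
  then have B: "\<forall>a\<in>set xs0. a \<le> y" using bd0 yc by blast
  have yx: "y < x" using U by blast
  have sx: "sorted_wrt (<) (xs0 @ [x])" using sx0 B yx by (auto simp: sorted_snoc_less)
  have i1: "ins1 c x = (u, Some y)" using U by blast
  have rm: "rowM r0 (xs0 @ [x]) = (u, ys @ [y])" using rm0 i1 by (simp add: rowM_snoc stepM_def)
  have cu: "set c \<subseteq> insert y (set u)" "x \<in> set u" using U by blast+
  have st: "set r0 \<subseteq> set u \<union> set (ys @ [y])" "set (xs0 @ [x]) \<subseteq> set u \<union> set (ys @ [y])"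
    using st1 st2 cu by auto
  have xz: "\<forall>z\<in>set u. y < z \<longrightarrow> x \<le> z" using U by blast
  have bd: "\<forall>a\<in>set (xs0 @ [x]). \<forall>z\<in>set u. (ys @ [y] = [] \<or> last (ys @ [y]) < z) \<longrightarrow> a \<le> z"
  proof (intro ballI impI)
    fix a z assume "a \<in> set (xs0 @ [x])" "z \<in> set u" "ys @ [y] = [] \<or> last (ys @ [y]) < z"
    then have "y < z" "a = x \<or> a \<in> set xs0" by auto
    then show "a \<le> z" using B xz \<open>z \<in> set u\<close> by fastforce
  qed
  have lc: "length c = length u" using U by blast
  show ?case using e sx rm st bd sr0 ln0 lc by simp
qed

lemma unrow_rowM:
  assumes "sdec r" "sorted_wrt (<) xs" "rowM r xs = (u, ys)"
  shows "unrow u ys (length u = Suc (length r)) = (r, xs)"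
  using assms(2,3)
proof (induction xs arbitrary: u ys rule: rev_induct)
  case Nil then show ?case by (auto simp: unrow_Nil)
next
  case (snoc x xs)
  obtain c ys0 where cy: "rowM r xs = (c, ys0)" by fastforce
  have sx: "sorted_wrt (<) xs" and xl: "\<forall>a\<in>set xs. a < x" using snoc.prems(1) sorted_snoc_less by auto
  note I = rowM_inc[OF assms(1) sx cy]
  have sc: "sdec c" using I by simp
  show ?case
  proof (cases "cnt x c < length c")
    case True
    have e: "u = c[cnt x c := x]" "ys = ys0 @ [c ! cnt x c]"
      using snoc.prems(2) True by (simp_all add: rowM_snoc stepM_def cy ins1_eq[OF sc])
    have "ub u (c ! cnt x c) = (c, x)" using ub_ins1[OF sc refl True] e by simp
    moreover have "length u = length c" using e by simp
    ultimately show ?thesis using snoc.IH[OF sx cy] e by (simp add: unrow_snoc)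
  next
    case False
    have "xs = []"
    proof (rule ccontr)
      assume "xs \<noteq> []"
      then have "last xs \<in> set c" "last xs < x" using I xl by auto
      then show False using False ex_less_iff[OF sc] by auto
    qed
    then have "c = r" "ys0 = []" using cy by auto
    then have "rowM r (xs @ [x]) = (r @ [x], [])"
      using False \<open>xs = []\<close> by (simp add: rowM_def stepM_def ins1_eq[OF assms(1)])
    then show ?thesis using snoc.prems(2) \<open>xs = []\<close> by (auto simp: unrow_Nil)
  qed
qed

fun chainc :: "nat list list \<Rightarrow> bool" where
  "chainc [] = True"
| "chainc [r] = True"
| "chainc (r # s # rs) = (colstrict r s \<and> chainc (s # rs))"

lemma chainc_Cons: "chainc (a # L) \<longleftrightarrow> (L = [] \<or> colstrict a (hd L)) \<and> chainc L"
  by (cases L) auto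

definition rv :: "nat list list \<Rightarrow> bool" where
  "rv R \<longleftrightarrow> (\<forall>r\<in>set R. sdec r \<and> (\<forall>a\<in>set r. 0 < a)) \<and> chainc R"

lemma rv_Cons: "rv (r # R) \<longleftrightarrow> sdec r \<and> (\<forall>a\<in>set r. 0 < a) \<and> (R = [] \<or> colstrict r (hd R)) \<and> rv R"
  by (auto simp: rv_def chainc_Cons)

lemma GF:
  assumes "rv R" "sorted_wrt (<) xs" "\<forall>x\<in>set xs. 0 < x \<and> x \<le> length R"
  shows "rv (foldl row_ins R xs) \<and> length (foldl row_ins R xs) = length R
   \<and> (\<forall>i<length R. length (foldl row_ins R xs ! i) = length (R ! i) \<or> length (foldl row_ins R xs ! i) = Suc (length (R ! i)))
   \<and> (\<forall>r\<in>set (foldl row_ins R xs). set r \<subseteq> \<Union>(set ` set R) \<union> set xs)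
   \<and> (R \<noteq> [] \<longrightarrow> length (hd (foldl row_ins R xs)) = length (hd R) + (if grows (hd R) xs then 1 else 0)
        \<and> (xs \<noteq> [] \<longrightarrow> last xs \<in> set (hd (foldl row_ins R xs))))"
  using assms
proof (induction R arbitrary: xs)
  case Nil
  then have "xs = []" by (cases xs) auto
  then show ?case by (simp add: rv_def)
next
  case (Cons r rs)
  obtain u ys where uy: "rowM r xs = (u, ys)" by fastforce
  have sr: "sdec r" and pr: "\<forall>a\<in>set r. 0 < a" and cr: "rs = [] \<or> colstrict r (hd rs)" and rvs: "rv rs"
    using Cons.prems(1) by (auto simp: rv_Cons)
  note I = rowM_inc[OF sr Cons.prems(2) uy]
  have su: "sdec u" and sys: "sorted_wrt (<) ys" using I by auto
  have yb: "\<forall>y\<in>set ys. 0 < y \<and> y \<le> length rs"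
  proof
    fix y assume y: "y \<in> set ys"
    then have "xs \<noteq> []" using I by auto
    then have "y < last xs" "last xs \<le> Suc (length rs)" using I y Cons.prems(3) by auto
    moreover have "0 < y" using I y pr Cons.prems(3) by auto
    ultimately show "0 < y \<and> y \<le> length rs" by simp
  qed
  note IH = Cons.IH[OF rvs sys yb]
  define G' where "G' = foldl row_ins rs ys"
  have Ge: "foldl row_ins (r # rs) xs = u # G'" using G_Cons[of r rs xs] uy G'_def by simp
  have lG: "length G' = length rs" using IH G'_def by simp
  have rvG: "rv G'" using IH G'_def by simp
  have pu: "\<forall>a\<in>set u. 0 < a" using I pr Cons.prems(3) by auto
  have cu: "G' = [] \<or> colstrict u (hd G')"
  proof (cases rs)
    case Nil then show ?thesis using lG by simp
  next
    case (Cons s rs')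
    then have "hd G' = fst (rowM s ys)" using G_Cons[of s rs' ys] G'_def by simp
    moreover have "colstrict r s" using cr Cons by simp
    moreover have "sdec s" using rvs Cons by (simp add: rv_Cons)
    ultimately show ?thesis using pair_fwd[OF sr, of s xs] uy by simp
  qed
  have rv1: "rv (u # G')" using su pu cu rvG by (simp add: rv_Cons)
  have gl: "\<forall>i<length (r # rs). length ((u # G') ! i) = length ((r # rs) ! i) \<or> length ((u # G') ! i) = Suc (length ((r # rs) ! i))"
  proof (intro allI impI)
    fix i assume "i < length (r # rs)"
    show "length ((u # G') ! i) = length ((r # rs) ! i) \<or> length ((u # G') ! i) = Suc (length ((r # rs) ! i))"
    proof (cases i)
      case 0 then show ?thesis using I by simp
    next
      case (Suc j)
      then show ?thesis using IH G'_def \<open>i < length (r # rs)\<close> by simp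
    qed
  qed
  have en: "\<forall>r'\<in>set (u # G'). set r' \<subseteq> \<Union>(set ` set (r # rs)) \<union> set xs"
  proof
    fix r' assume "r' \<in> set (u # G')"
    then consider "r' = u" | "r' \<in> set G'" by auto
    then show "set r' \<subseteq> \<Union>(set ` set (r # rs)) \<union> set xs"
    proof cases
      case 1 then show ?thesis using I by auto
    next
      case 2
      then have "set r' \<subseteq> \<Union>(set ` set rs) \<union> set ys" using IH G'_def by blast
      then show ?thesis using I by auto
    qed
  qed
  have hd1: "length (hd (u # G')) = length (hd (r # rs)) + (if grows (hd (r # rs)) xs then 1 else 0)"
    using I by simp
  have hd2: "xs \<noteq> [] \<longrightarrow> last xs \<in> set (hd (u # G'))" using I by simp
  show ?case unfolding Ge using rv1 lG gl en hd1 hd2 by simp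
qed

lemma rowM_ys_bound:
  assumes "sdec r" "sorted_wrt (<) xs" "rowM r xs = (u, ys)" "\<forall>a\<in>set r. 0 < a"
    "\<forall>x\<in>set xs. 0 < x \<and> x \<le> Suc L"
  shows "\<forall>y\<in>set ys. 0 < y \<and> y \<le> L"
proof
  note I = rowM_inc[OF assms(1-3)]
  fix y assume y: "y \<in> set ys"
  then have "xs \<noteq> []" using I by auto
  then have "y < last xs" "last xs \<le> Suc L" using I y assms(5) by auto
  moreover have "0 < y" using I y assms(4,5) by auto
  ultimately show "0 < y \<and> y \<le> L" by simp
qed

fun unG :: "nat list list \<Rightarrow> nat list \<Rightarrow> nat list list \<times> nat list" where
  "unG [] lam = ([], [])"
| "unG (u # us) lam = (case unG us (tl lam) of (rs, ys) \<Rightarrow>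
      (case unrow u ys (length u = Suc (hd lam)) of (r, xs) \<Rightarrow> (r # rs, xs)))"

lemma unG_G:
  assumes "rv R" "sorted_wrt (<) xs" "\<forall>x\<in>set xs. 0 < x \<and> x \<le> length R"
  shows "unG (foldl row_ins R xs) (map length R) = (R, xs)"
  using assms
proof (induction R arbitrary: xs)
  case Nil
  then have "xs = []" by (cases xs) auto
  then show ?case by simp
next
  case (Cons r rs)
  obtain u ys where uy: "rowM r xs = (u, ys)" by fastforce
  have sr: "sdec r" and pr: "\<forall>a\<in>set r. 0 < a" and rvs: "rv rs"
    using Cons.prems(1) by (auto simp: rv_Cons)
  have sys: "sorted_wrt (<) ys" using rowM_inc[OF sr Cons.prems(2) uy] by simp
  have yb: "\<forall>y\<in>set ys. 0 < y \<and> y \<le> length rs"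
    using rowM_ys_bound[OF sr Cons.prems(2) uy pr, of "length rs"] Cons.prems(3) by simp
  have "foldl row_ins (r # rs) xs = u # foldl row_ins rs ys" using G_Cons[of r rs xs] uy by simp
  then show ?case using Cons.IH[OF rvs sys yb] unrow_rowM[OF sr Cons.prems(2) uy] by simp
qed

lemma G_unG:
  assumes "rv U" "length lam = length U" "\<forall>i<length U. lam ! i = length (U ! i) \<or> Suc (lam ! i) = length (U ! i)"
    "sorted_wrt (\<lambda>a b. b \<le> a) lam" "unG U lam = (T, xs)"
  shows "rv T \<and> map length T = lam \<and> sorted_wrt (<) xs \<and> set xs \<subseteq> \<Union>(set ` set U)
    \<and> (\<forall>r\<in>set T. set r \<subseteq> \<Union>(set ` set U)) \<and> foldl row_ins T xs = U"
  using assms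
proof (induction U arbitrary: lam T xs)
  case Nil then show ?case by simp
next
  case (Cons u us)
  obtain l ls where lam: "lam = l # ls" using Cons.prems(2) by (cases lam) auto
  obtain rs ys where ry: "unG us ls = (rs, ys)" by fastforce
  define g where "g = (length u = Suc l)"
  obtain r xs0 where rx: "unrow u ys g = (r, xs0)" by fastforce
  have e: "T = r # rs" "xs = xs0" using Cons.prems(5) lam ry rx g_def by auto
  have su: "sdec u" and pu: "\<forall>a\<in>set u. 0 < a" and cu: "us = [] \<or> colstrict u (hd us)" and rvs: "rv us"
    using Cons.prems(1) by (auto simp: rv_Cons)
  have p3: "\<forall>i<length us. ls ! i = length (us ! i) \<or> Suc (ls ! i) = length (us ! i)"
    using Cons.prems(3) lam by fastforce
  have p4: "sorted_wrt (\<lambda>a b. b \<le> a) ls" and lls: "\<forall>b\<in>set ls. b \<le> l" using Cons.prems(4) lam by auto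
  have IH: "rv rs \<and> map length rs = ls \<and> sorted_wrt (<) ys \<and> set ys \<subseteq> \<Union>(set ` set us)
    \<and> (\<forall>r\<in>set rs. set r \<subseteq> \<Union>(set ` set us)) \<and> foldl row_ins rs ys = us"
    using Cons.IH[OF rvs _ p3 p4 ry] Cons.prems(2) lam by simp
  have rvrs: "rv rs" and mrs: "map length rs = ls" and sys: "sorted_wrt (<) ys"
    and yse: "set ys \<subseteq> \<Union>(set ` set us)" and rse: "\<forall>r\<in>set rs. set r \<subseteq> \<Union>(set ` set us)"
    and Grs: "foldl row_ins rs ys = us" using IH by blast+
  have pre3: "ys \<noteq> [] \<Longrightarrow> u \<noteq> [] \<and> last ys < hd u"
  proof -
    assume yne: "ys \<noteq> []"
    have "rs \<noteq> []"
    proof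
      assume "rs = []"
      then have "us = []" using mrs Cons.prems(2) lam by simp
      then show False using Grs \<open>rs = []\<close> yne G_Nil_iff by simp
    qed
    then obtain s rs' where rs: "rs = s # rs'" by (cases rs) auto
    have ss: "sdec s" using rvrs rs by (simp add: rv_Cons)
    have hu: "hd us = fst (rowM s ys)" using G_Cons[of s rs' ys] Grs rs by (metis list.sel(1))
    have "last ys \<in> set (hd us)" using rowM_inc[OF ss sys, of "fst (rowM s ys)" "snd (rowM s ys)"] yne hu by simp
    then obtain j where j: "j < length (hd us)" "hd us ! j = last ys" by (auto simp: in_set_conv_nth)
    have "us \<noteq> []" using hu Grs rs foldl_row_ins_ne by auto
    then have cs: "colstrict u (hd us)" using cu by simp
    then have "last ys < u ! j" "j < length u" using j unfolding colstrict_def by auto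
    moreover then have "u ! j \<le> hd u" using sdec_hd[OF su] by simp
    ultimately show ?thesis by auto
  qed
  have pre4: "g \<Longrightarrow> u \<noteq> []" using g_def by auto
  note R = unrow_RU[OF su sys pre3 pre4 rx]
  have sr: "sdec r" and sx: "sorted_wrt (<) xs0" and rm: "rowM r xs0 = (u, ys)"
    and lr: "length r + (if g then 1 else 0) = length u" and rse2: "set r \<subseteq> set u \<union> set ys"
    and xse: "set xs0 \<subseteq> set u \<union> set ys" using R by blast+
  have lrl: "length r = l"
  proof (cases g)
    case True then show ?thesis using lr g_def by simp
  next
    case False
    then have "l = length u" using Cons.prems(3) lam g_def by force
    then show ?thesis using lr False by simp
  qed
  have G: "foldl row_ins (r # rs) xs0 = u # us" using G_Cons[of r rs xs0] rm Grs by simp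
  have pos: "\<forall>a\<in>\<Union>(set ` set (u # us)). 0 < a" using Cons.prems(1) unfolding rv_def by auto
  have pr: "\<forall>a\<in>set r. 0 < a" using rse2 yse pos by auto
  have cr: "rs = [] \<or> colstrict r (hd rs)"
  proof (cases rs)
    case Nil then show ?thesis by simp
  next
    case (Cons s rs')
    have ss: "sdec s" using rvrs Cons by (simp add: rv_Cons)
    have hu: "us = fst (rowM s ys) # foldl row_ins rs' (snd (rowM s ys))" using G_Cons[of s rs' ys] Grs Cons by auto
    have ls: "length s \<le> length r" using mrs Cons lls lrl by auto
    have "colstrict u (hd us)" using cu hu by auto
    then have "colstrict (fst (rowM r xs0)) (fst (rowM s (snd (rowM r xs0))))" using rm hu by simp
    then show ?thesis using pair_rev[OF sr ss sx ls] Cons by simp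
  qed
  have rvT: "rv (r # rs)" using sr pr cr rvrs by (simp add: rv_Cons)
  show ?case unfolding e using rvT mrs lrl lam sx xse yse rse2 rse G by auto
qed

section \<open>Tableaux and phi\<close>

definition tabv :: "nat \<Rightarrow> nat list list \<Rightarrow> bool" where
  "tabv n T \<longleftrightarrow> length T = n \<and> rv T \<and> (\<forall>r\<in>set T. \<forall>a\<in>set r. a \<le> n)"

lemma chainc_nth: "chainc R \<longleftrightarrow> (\<forall>i. Suc i < length R \<longrightarrow> colstrict (R ! i) (R ! Suc i))"
proof (induction R rule: chainc.induct)
  case (3 r s rs)
  show ?case
  proof
    assume "chainc (r # s # rs)"
    then show "\<forall>i. Suc i < length (r # s # rs) \<longrightarrow> colstrict ((r # s # rs) ! i) ((r # s # rs) ! Suc i)"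
      using 3 by (auto simp: nth_Cons split: nat.splits)
  next
    assume a: "\<forall>i. Suc i < length (r # s # rs) \<longrightarrow> colstrict ((r # s # rs) ! i) ((r # s # rs) ! Suc i)"
    have "colstrict r s" using a[rule_format, of 0] by simp
    moreover have "\<forall>i. Suc i < length (s # rs) \<longrightarrow> colstrict ((s # rs) ! i) ((s # rs) ! Suc i)"
      using a by (metis Suc_less_eq length_Cons nth_Cons_Suc)
    ultimately show "chainc (r # s # rs)" using 3 by simp
  qed
qed auto

lemma dec_consec:
  assumes "\<forall>i. Suc i < length xs \<longrightarrow> xs ! Suc i \<le> (xs ! i :: nat)"
  shows "sorted_wrt (\<lambda>a b. b \<le> a) xs"
  unfolding sorted_wrt_iff_nth_less
proof (intro allI impI)
  fix i j assume ij: "i < j" "j < length xs"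
  then show "xs ! j \<le> xs ! i"
  proof (induction j)
    case 0 then show ?case by simp
  next
    case (Suc j)
    then show ?case using assms by (metis le_trans less_Suc_eq order_refl Suc_lessD)
  qed
qed

lemma SSYT_iff: "T \<in> SSYT lam n \<longleftrightarrow> tabv n T \<and> map length T = lam"
proof
  assume a: "T \<in> SSYT lam n"
  then have ip: "is_partition n lam" and ml: "map length T = lam"
    and en: "\<forall>r\<in>set T. \<forall>x\<in>set r. 1 \<le> x \<and> x \<le> n" and sr: "\<forall>r\<in>set T. sorted_wrt (\<lambda>a b. b \<le> a) r"
    and cl: "\<forall>i j. Suc i < length T \<longrightarrow> j < length (T ! Suc i) \<longrightarrow> T ! Suc i ! j < T ! i ! j"
    unfolding SSYT_def by auto
  have lT: "length T = n" using ip ml unfolding is_partition_def by auto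
  have sl: "sorted_wrt (\<lambda>a b. b \<le> a) (map length T)" using ip ml unfolding is_partition_def by auto
  have "chainc T" unfolding chainc_nth colstrict_def
  proof (intro allI impI conjI)
    fix i assume "Suc i < length T"
    then show "length (T ! Suc i) \<le> length (T ! i)" using sl unfolding sorted_wrt_iff_nth_less by auto
    fix j assume "j < length (T ! Suc i)"
    then show "T ! Suc i ! j < T ! i ! j" using cl \<open>Suc i < length T\<close> by auto
  qed
  then show "tabv n T \<and> map length T = lam" using lT en sr ml
    unfolding tabv_def rv_def sdec_def by (auto simp: Suc_le_eq)
next
  assume a: "tabv n T \<and> map length T = lam"
  then have lT: "length T = n" and rT: "rv T" and en: "\<forall>r\<in>set T. \<forall>a\<in>set r. a \<le> n" and ml: "map length T = lam"
    unfolding tabv_def by auto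
  have ch: "\<forall>i. Suc i < length T \<longrightarrow> colstrict (T ! i) (T ! Suc i)" using rT chainc_nth unfolding rv_def by auto
  have "sorted_wrt (\<lambda>a b. b \<le> a) (map length T)"
    by (rule dec_consec) (use ch in \<open>auto simp: colstrict_def\<close>)
  then have ip: "is_partition n lam" using lT ml unfolding is_partition_def by auto
  show "T \<in> SSYT lam n" unfolding SSYT_def using ip ml en rT ch
    unfolding rv_def sdec_def colstrict_def by (auto simp: Suc_le_eq)
qed

lemma tab_bound:
  assumes "tabv n T" "i < length T" "a \<in> set (T ! i)"
  shows "a + i \<le> n"
proof -
  have ch: "\<forall>i. Suc i < length T \<longrightarrow> colstrict (T ! i) (T ! Suc i)" using assms(1) chainc_nth unfolding tabv_def rv_def by auto
  have en: "\<forall>r\<in>set T. \<forall>a\<in>set r. a \<le> n" using assms(1) unfolding tabv_def by auto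
  have "\<forall>q<length (T ! i). T ! i ! q + i \<le> n" using assms(2)
  proof (induction i)
    case 0 then show ?case using en by (metis add_0_right length_greater_0_conv list.size(3) not_less0 nth_mem)
  next
    case (Suc i)
    show ?case
    proof (intro allI impI)
      fix q assume q: "q < length (T ! Suc i)"
      have "colstrict (T ! i) (T ! Suc i)" using ch Suc.prems by simp
      then have "q < length (T ! i)" "T ! Suc i ! q < T ! i ! q" using q unfolding colstrict_def by auto
      then show "T ! Suc i ! q + Suc i \<le> n" using Suc.IH Suc.prems by fastforce
    qed
  qed
  then show ?thesis using assms(3) by (auto simp: in_set_conv_nth)
qed

lemma colstrict_cnt:
  assumes "sdec r" "sdec s" "colstrict r s"
  shows "cnt v s \<le> cnt (Suc v) r"
proof (cases "cnt v s")
  case 0 then show ?thesis by simp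
next
  case (Suc c)
  then have "c < length s" "v \<le> s ! c" using cnt_less_iff[OF assms(2), of c v] by auto
  then have "c < length r" "Suc v \<le> r ! c" using assms(3) unfolding colstrict_def by auto
  then have "c < cnt (Suc v) r" using cnt_less_iff[OF assms(1)] by simp
  then show ?thesis using Suc by simp
qed

lemma row_mono:
  assumes "p \<in> SPP_all n" "1 \<le> i" "i \<le> k'" "k' \<le> k" "k \<le> n"
  shows "p i k \<le> p i k'"
  using assms(4,5)
proof (induction k)
  case 0 then show ?case by simp
next
  case (Suc k)
  show ?case
  proof (cases "k' = Suc k")
    case True then show ?thesis by simp
  next
    case False
    then have "k' \<le> k" using Suc.prems by simp
    moreover have "p i (Suc k) \<le> p i k" using assms(1,2) \<open>k' \<le> k\<close> assms(3) Suc.prems unfolding SPP_all_def by auto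
    ultimately show ?thesis using Suc.IH Suc.prems by fastforce
  qed
qed

lemma col_mono:
  assumes "p \<in> SPP_all n" "1 \<le> i" "Suc i \<le> k" "k \<le> n"
  shows "p (Suc i) k \<le> p i k"
  using assms unfolding SPP_all_def by auto

lemma SPP_zero: "p \<in> SPP_all n \<Longrightarrow> \<not> (1 \<le> i \<and> i \<le> k \<and> k \<le> n) \<Longrightarrow> p i k = 0"
  unfolding SPP_all_def by auto

lemma interval_lemma:
  assumes "S \<subseteq> {i..(n::nat)}" "\<And>k k'. k \<in> S \<Longrightarrow> i \<le> k' \<Longrightarrow> k' \<le> k \<Longrightarrow> k' \<in> S"
  shows "S = {i..<i + card S}"
proof (cases "S = {}")
  case True then show ?thesis by simp
next
  case False
  have fin: "finite S" using assms(1) finite_subset by blast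
  define M where "M = Max S"
  have M: "M \<in> S" "\<forall>k\<in>S. k \<le> M" using fin False M_def by auto
  have iM: "i \<le> M" using M assms(1) by auto
  have "S = {i..M}"
  proof
    show "S \<subseteq> {i..M}" using M assms(1) by auto
    show "{i..M} \<subseteq> S" using assms(2) M by auto
  qed
  then show ?thesis using iM by auto
qed

definition fset :: "nat \<Rightarrow> (nat \<Rightarrow> nat \<Rightarrow> nat) \<Rightarrow> nat \<Rightarrow> nat \<Rightarrow> nat set" where
  "fset n p i j = {k. i \<le> k \<and> k \<le> n \<and> j \<le> p i k}"

lemma fset_interval:
  assumes "p \<in> SPP_all n" "1 \<le> i"
  shows "fset n p i j = {i..<i + card (fset n p i j)}"
proof (rule interval_lemma[where n = n])
  show "fset n p i j \<subseteq> {i..n}" unfolding fset_def by auto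
  fix k k' assume "k \<in> fset n p i j" "i \<le> k'" "k' \<le> k"
  then show "k' \<in> fset n p i j" using row_mono[OF assms, of k' k] unfolding fset_def by auto
qed

lemma fset_iff:
  assumes "p \<in> SPP_all n" "1 \<le> i" "i \<le> k" "k \<le> n"
  shows "j \<le> p i k \<longleftrightarrow> k < i + card (fset n p i j)"
proof -
  have "j \<le> p i k \<longleftrightarrow> k \<in> fset n p i j" using assms unfolding fset_def by auto
  also have "\<dots> \<longleftrightarrow> k < i + card (fset n p i j)" using fset_interval[OF assms(1,2), of j] assms(3)
    by (metis atLeastLessThan_iff)
  finally show ?thesis .
qed

lemma fset_le: assumes "i \<le> n" shows "card (fset n p i j) + i \<le> Suc n"
proof -
  have "fset n p i j \<subseteq> {i..n}" unfolding fset_def by auto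
  then have "card (fset n p i j) \<le> card {i..n}" by (intro card_mono) auto
  then show ?thesis using assms by simp
qed

lemma phi_nth:
  assumes "q < n"
  shows "phi n p ! q = map (\<lambda>j. card (fset n p (Suc q) j)) [1..<p (Suc q) (Suc q) + 1]"
  using assms unfolding phi_def fset_def by (simp add: nth_map del: upt_Suc)

lemma length_phi: "length (phi n p) = n"
  by (simp add: phi_def)

lemma fset_finite: "finite (fset n p i j)"
  by (rule finite_subset[of _ "{..n}"]) (auto simp: fset_def)

lemma fset_anti: "j \<le> j' \<Longrightarrow> card (fset n p i j') \<le> card (fset n p i j)"
  by (rule card_mono[OF fset_finite]) (auto simp: fset_def)

lemma phi_tab:
  assumes P: "p \<in> SPP_all n"
  shows "tabv n (phi n p) \<and> (\<forall>q<n. length (phi n p ! q) = p (Suc q) (Suc q))"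
proof -
  let ?F = "\<lambda>i j. card (fset n p i j)"
  have rows: "\<forall>r\<in>set (phi n p). sdec r \<and> (\<forall>a\<in>set r. 0 < a \<and> a \<le> n)"
  proof
    fix r assume "r \<in> set (phi n p)"
    then obtain q where q: "q < n" "r = phi n p ! q" by (auto simp: in_set_conv_nth length_phi)
    have re: "r = map (?F (Suc q)) [1..<p (Suc q) (Suc q) + 1]" using phi_nth[OF q(1)] q by simp
    have "sdec r" unfolding re by (rule sdecI) (simp add: fset_anti nth_map del: upt_Suc)
    moreover have "\<forall>a\<in>set r. 0 < a \<and> a \<le> n"
    proof
      fix a assume "a \<in> set r"
      then obtain j where j: "1 \<le> j" "j \<le> p (Suc q) (Suc q)" "a = ?F (Suc q) j" using re by auto
      have "Suc q \<in> fset n p (Suc q) j" using j q unfolding fset_def by auto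
      then have "0 < a" using j(3) fset_finite card_gt_0_iff by blast
      moreover have "a + Suc q \<le> Suc n" using fset_le[of "Suc q" n p j] q j by simp
      ultimately show "0 < a \<and> a \<le> n" by simp
    qed
    ultimately show "sdec r \<and> (\<forall>a\<in>set r. 0 < a \<and> a \<le> n)" by simp
  qed
  have ch: "chainc (phi n p)" unfolding chainc_nth
  proof (intro allI impI)
    fix q assume q: "Suc q < length (phi n p)"
    then have qn: "Suc q < n" by (simp add: length_phi)
    define i where "i = Suc q"
    have r1: "phi n p ! q = map (?F i) [1..<p i i + 1]" using phi_nth[of q n p] qn i_def by simp
    have r2: "phi n p ! Suc q = map (?F (Suc i)) [1..<p (Suc i) (Suc i) + 1]" using phi_nth[of "Suc q" n p] qn i_def by simp
    have l1: "p (Suc i) (Suc i) \<le> p i (Suc i)" using col_mono[OF P, of i "Suc i"] qn i_def by simp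
    have l2: "p i (Suc i) \<le> p i i" using row_mono[OF P, of i i "Suc i"] qn i_def by simp
    show "colstrict (phi n p ! q) (phi n p ! Suc q)" unfolding colstrict_def r1 r2
    proof (intro conjI allI impI)
      show "length (map (?F (Suc i)) [1..<p (Suc i) (Suc i) + 1]) \<le> length (map (?F i) [1..<p i i + 1])"
        using l1 l2 by simp
      fix j0 assume j0: "j0 < length (map (?F (Suc i)) [1..<p (Suc i) (Suc i) + 1])"
      define j where "j = Suc j0"
      have jl: "j \<le> p (Suc i) (Suc i)" using j0 j_def by (simp del: upt_Suc)
      define c where "c = ?F (Suc i) j"
      have "Suc i < Suc i + c" using fset_iff[OF P, of "Suc i" "Suc i" j] jl qn i_def c_def by simp
      then have c1: "1 \<le> c" by simp
      have cb: "c + Suc i \<le> Suc n" using fset_le[of "Suc i" n p j] qn i_def c_def by simp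
      define k where "k = i + c"
      have kn: "Suc i \<le> k" "k \<le> n" using c1 cb k_def by auto
      have "j \<le> p (Suc i) k" using fset_iff[OF P, of "Suc i" k j] kn c_def k_def by simp
      also have "\<dots> \<le> p i k" using col_mono[OF P, of i k] kn i_def by simp
      finally have "k < i + ?F i j" using fset_iff[OF P, of i k j] kn i_def by simp
      then have "c < ?F i j" using k_def by simp
      then show "map (?F (Suc i)) [1..<p (Suc i) (Suc i) + 1] ! j0 < map (?F i) [1..<p i i + 1] ! j0"
        using j0 l1 l2 c_def j_def by (simp add: nth_map del: upt_Suc)
    qed
  qed
  have "tabv n (phi n p)" using rows ch unfolding tabv_def rv_def by (simp add: length_phi)
  moreover have "\<forall>q<n. length (phi n p ! q) = p (Suc q) (Suc q)" using phi_nth by simp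
  ultimately show ?thesis by simp
qed

definition psi :: "nat \<Rightarrow> nat list list \<Rightarrow> nat \<Rightarrow> nat \<Rightarrow> nat" where
  "psi n T i k = (if 1 \<le> i \<and> i \<le> k \<and> k \<le> n then cnt (Suc (k - i)) (T ! (i - 1)) else 0)"

lemma len_filter_upt: "length (filter (\<lambda>j. j \<le> q) [1..<N+1]) = min N q"
  by (induction N) auto

lemma psi_phi:
  assumes P: "p \<in> SPP_all n"
  shows "psi n (phi n p) = p"
proof (intro ext)
  fix i k
  show "psi n (phi n p) i k = p i k"
  proof (cases "1 \<le> i \<and> i \<le> k \<and> k \<le> n")
    case True
    then obtain q where q: "i = Suc q" "q < n" by (cases i) auto
    let ?F = "\<lambda>j. card (fset n p i j)"
    have r: "phi n p ! (i - 1) = map ?F [1..<p i i + 1]" using phi_nth[OF q(2), of p] q by simp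
    have "cnt (Suc (k - i)) (map ?F [1..<p i i + 1]) = length (filter (\<lambda>j. Suc (k - i) \<le> ?F j) [1..<p i i + 1])"
      by (simp add: cnt_def filter_map comp_def del: upt_Suc)
    also have "filter (\<lambda>j. Suc (k - i) \<le> ?F j) [1..<p i i + 1] = filter (\<lambda>j. j \<le> p i k) [1..<p i i + 1]"
    proof (rule filter_cong[OF refl])
      fix j show "(Suc (k - i) \<le> ?F j) = (j \<le> p i k)" using fset_iff[OF P, of i k j] True by auto
    qed
    also have "length \<dots> = min (p i i) (p i k)" by (rule len_filter_upt)
    also have "\<dots> = p i k" using row_mono[OF P, of i i k] True by simp
    finally show ?thesis using True r by (simp add: psi_def)
  next
    case False
    then show ?thesis using SPP_zero[OF P False] False by (auto simp: psi_def)
  qed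
qed

lemma phi_psi:
  assumes T: "tabv n T"
  shows "psi n T \<in> SPP_all n \<and> phi n (psi n T) = T"
proof -
  have lT: "length T = n" and rT: "rv T" using T unfolding tabv_def by auto
  have ch: "\<forall>i. Suc i < length T \<longrightarrow> colstrict (T ! i) (T ! Suc i)" using rT chainc_nth unfolding rv_def by auto
  have rows: "\<And>q. q < n \<Longrightarrow> sdec (T ! q) \<and> (\<forall>a\<in>set (T ! q). 0 < a)" using rT lT unfolding rv_def by auto
  have S1: "\<forall>i j. psi n T i j \<noteq> 0 \<longrightarrow> 1 \<le> i \<and> i \<le> j \<and> j \<le> n"
    by (auto simp: psi_def split: if_splits)
  have S2: "\<forall>i j. 1 \<le> i \<longrightarrow> i \<le> j \<longrightarrow> j < n \<longrightarrow> psi n T i (Suc j) \<le> psi n T i j"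
    by (auto simp: psi_def Suc_diff_le intro: cnt_mono)
  have S3: "\<forall>i j. 1 \<le> i \<longrightarrow> Suc i \<le> j \<longrightarrow> j \<le> n \<longrightarrow> psi n T (Suc i) j \<le> psi n T i j"
  proof (intro allI impI)
    fix i j assume a: "1 \<le> i" "Suc i \<le> j" "j \<le> n"
    then obtain q where q: "i = Suc q" by (cases i) auto
    have c: "colstrict (T ! q) (T ! i)" using ch a q lT by simp
    have "cnt (j - i) (T ! i) \<le> cnt (Suc (j - i)) (T ! q)"
      using colstrict_cnt[OF _ _ c] rows a q lT by simp
    then show "psi n T (Suc i) j \<le> psi n T i j" using a q by (simp add: psi_def Suc_diff_Suc)
  qed
  have S: "psi n T \<in> SPP_all n" unfolding SPP_all_def using S1 S2 S3 by blast
  have E: "phi n (psi n T) = T"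
  proof (rule nth_equalityI)
    show "length (phi n (psi n T)) = length T" using lT by (simp add: length_phi)
    fix q assume "q < length (phi n (psi n T))"
    then have q: "q < n" by (simp add: length_phi)
    have sq: "sdec (T ! q)" and pq: "\<forall>a\<in>set (T ! q). 0 < a" using rows[OF q] by auto
    have d: "psi n T (Suc q) (Suc q) = length (T ! q)" using q cnt_1[OF pq] by (simp add: psi_def)
    show "phi n (psi n T) ! q = T ! q"
    proof (rule nth_equalityI)
      show "length (phi n (psi n T) ! q) = length (T ! q)" using phi_nth[OF q] d by (simp del: upt_Suc)
      fix j0 assume "j0 < length (phi n (psi n T) ! q)"
      then have j0: "j0 < length (T ! q)" using phi_nth[OF q] d by (simp del: upt_Suc)
      define a where "a = T ! q ! j0"
      have am: "a \<in> set (T ! q)" using j0 a_def by simp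
      have a0: "0 < a" using pq am by simp
      have ab: "a + q \<le> n" using tab_bound[OF T _ am] q lT by simp
      have "fset n (psi n T) (Suc q) (Suc j0) = {Suc q..<Suc q + a}"
      proof (rule set_eqI)
        fix k
        show "k \<in> fset n (psi n T) (Suc q) (Suc j0) \<longleftrightarrow> k \<in> {Suc q..<Suc q + a}"
        proof (cases "Suc q \<le> k \<and> k \<le> n")
          case True
          then have "psi n T (Suc q) k = cnt (Suc (k - Suc q)) (T ! q)" by (simp add: psi_def)
          then have "Suc j0 \<le> psi n T (Suc q) k \<longleftrightarrow> Suc (k - Suc q) \<le> a"
            using cnt_less_iff[OF sq, of j0 "Suc (k - Suc q)"] j0 a_def by (simp add: Suc_le_eq)
          then show ?thesis using True ab unfolding fset_def by auto
        next
          case False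
          then show ?thesis using ab unfolding fset_def by auto
        qed
      qed
      then have "card (fset n (psi n T) (Suc q) (Suc j0)) = a" by simp
      then show "phi n (psi n T) ! q ! j0 = T ! q ! j0"
        using phi_nth[OF q] d j0 a_def by (simp add: nth_map del: upt_Suc)
    qed
  qed
  show ?thesis using S E by simp
qed

lemma phi_inv_eq: "tabv n T \<Longrightarrow> phi_inv n T = psi n T"
proof -
  assume T: "tabv n T"
  have inj: "inj_on (phi n) (SPP_all n)" by (metis inj_on_inverseI psi_phi)
  show ?thesis unfolding phi_inv_def using the_inv_into_f_eq[OF inj, of "psi n T" T] phi_psi[OF T] by simp
qed

lemma tabv_lengths_dec: "tabv n U \<Longrightarrow> sorted_wrt (\<lambda>a b. b \<le> a) (map length U)"
  using SSYT_iff[of U "map length U" n] unfolding SSYT_def is_partition_def by auto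

lemma F_map_eq:
  assumes U: "tabv n U" and e: "unG U (map (\<lambda>a. 2 * (a div 2)) (map length U)) = (T, xs)"
  shows "F_map n U = (T, \<lambda>i. if i \<in> set xs then 1 else 0) \<and> tabv n T
    \<and> map length T = map (\<lambda>a. 2 * (a div 2)) (map length U) \<and> sorted_wrt (<) xs \<and> set xs \<subseteq> {1..n}
    \<and> foldl row_ins T xs = U"
proof -
  define lam where "lam = map (\<lambda>a. 2 * (a div 2)) (map length U)"
  have rU: "rv U" and lU: "length U = n" and eU: "\<forall>r\<in>set U. \<forall>a\<in>set r. a \<le> n" using U unfolding tabv_def by auto
  have p2: "length lam = length U" unfolding lam_def by simp
  have p3: "\<forall>i<length U. lam ! i = length (U ! i) \<or> Suc (lam ! i) = length (U ! i)"
    unfolding lam_def by auto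
  have p4: "sorted_wrt (\<lambda>a b. b \<le> a) lam"
    using tabv_lengths_dec[OF U] unfolding lam_def sorted_wrt_iff_nth_less by (auto intro: div_le_mono)
  note G = G_unG[OF rU p2 p3 p4 e[folded lam_def]]
  have pos: "\<forall>r\<in>set U. \<forall>a\<in>set r. 0 < a" using rU unfolding rv_def by auto
  have tT: "tabv n T" using G eU unfolding tabv_def by (metis UN_E length_map lU p2 subsetD)
  have mT: "map length T = lam" and sx: "sorted_wrt (<) xs" and GT: "foldl row_ins T xs = U" using G by blast+
  have xsn: "set xs \<subseteq> {1..n}" using G eU pos by fastforce
  let ?P = "\<lambda>(T', xs'). T' \<in> SSYT lam n \<and> sorted_wrt (<) xs' \<and> set xs' \<subseteq> {1..n} \<and> foldl row_ins T' xs' = U"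
  have "(THE x. ?P x) = (T, xs)"
  proof (rule the_equality)
    show "?P (T, xs)" using tT mT sx xsn GT SSYT_iff by simp
    fix x assume Px: "?P x"
    obtain T' xs' where x: "x = (T', xs')" by fastforce
    have t': "tabv n T'" "map length T' = lam" using Px x SSYT_iff by auto
    have r': "rv T'" "length T' = n" using t' unfolding tabv_def by auto
    have b': "\<forall>x\<in>set xs'. 0 < x \<and> x \<le> length T'" using Px x r' by auto
    have "unG (foldl row_ins T' xs') (map length T') = (T', xs')" using unG_G[OF r'(1) _ b'] Px x by simp
    then show "x = (T, xs)" using Px x t' e lam_def by simp
  qed
  then have "F_map n U = (T, \<lambda>i. if i \<in> set xs then 1 else 0)" unfolding F_map_def lam_def[symmetric] Let_def by simp
  then show ?thesis using tT mT sx xsn GT lam_def by simp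
qed

lemma phi0_len: "0 < n \<Longrightarrow> length (phi n p ! 0) = p 1 1"
  using phi_nth[of 0 n p] by (simp del: upt_Suc)

lemma psi_diag: "tabv n U \<Longrightarrow> 1 \<le> i \<Longrightarrow> i \<le> n \<Longrightarrow> psi n U i i = length (U ! (i - 1))"
proof -
  assume U: "tabv n U" "1 \<le> i" "i \<le> n"
  then have "U ! (i - 1) \<in> set U" unfolding tabv_def by auto
  then have "\<forall>a\<in>set (U ! (i - 1)). 0 < a" using U unfolding tabv_def rv_def by auto
  then show ?thesis using U cnt_1 by (simp add: psi_def)
qed

definition ind :: "nat list \<Rightarrow> nat \<Rightarrow> nat" where
  "ind xs = (\<lambda>i. if i \<in> set xs then 1 else 0)"

lemma fwd:
  assumes n: "0 < n" and P: "p \<in> SPP_all n"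
  obtains T xs where "Phi n p = (psi n T, ind xs)" "tabv n T"
    "map length T = map (\<lambda>a. 2 * (a div 2)) (map length (phi n p))" "sorted_wrt (<) xs" "set xs \<subseteq> {1..n}"
    "foldl row_ins T xs = phi n p"
proof -
  obtain T xs where e: "unG (phi n p) (map (\<lambda>a. 2 * (a div 2)) (map length (phi n p))) = (T, xs)" by fastforce
  have U: "tabv n (phi n p)" using phi_tab[OF P] by simp
  note F = F_map_eq[OF U e]
  have "Phi n p = (psi n T, ind xs)" using F phi_inv_eq[of n T] unfolding Phi_def ind_def by simp
  then show ?thesis using that F by blast
qed

lemma filter_ind: "sorted_wrt (<) xs \<Longrightarrow> set xs \<subseteq> {1..n} \<Longrightarrow> filter (\<lambda>i. ind xs i = 1) [1..<n+1] = xs"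
proof -
  assume a: "sorted_wrt (<) xs" "set xs \<subseteq> {1..n}"
  have "sorted_wrt (<) (filter (\<lambda>i. ind xs i = 1) [1..<n+1])" by (rule sorted_wrt_filter) (rule sorted_wrt_upt)
  then have s1: "sorted (filter (\<lambda>i. ind xs i = 1) [1..<n+1])" "distinct (filter (\<lambda>i. ind xs i = 1) [1..<n+1])"
    using strict_sorted_iff by blast+
  have s2: "sorted xs" "distinct xs" using a strict_sorted_iff by auto
  have "set (filter (\<lambda>i. ind xs i = 1) [1..<n+1]) = set xs" using a(2) by (auto simp: ind_def)
  then show ?thesis using sorted_distinct_set_unique[OF s1 s2] by simp
qed

lemma bwd:
  assumes n: "0 < n" and P: "p' \<in> SPP_all n" and ev: "\<forall>i\<in>{1..n}. even (p' i i)" and t: "t \<in> binvecs n"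
  defines "xs \<equiv> filter (\<lambda>i. t i = 1) [1..<n+1]"
  defines "U \<equiv> foldl row_ins (phi n p') xs"
  shows "tabv n U \<and> psi n U \<in> SPP_all n \<and> phi n (psi n U) = U \<and> Phi n (psi n U) = (p', t)
    \<and> length (U ! 0) = p' 1 1 + (if grows (phi n p' ! 0) xs then 1 else 0) \<and> psi n U 1 1 = length (U ! 0)
    \<and> sorted_wrt (<) xs \<and> set xs \<subseteq> {1..n}"
proof -
  define T where "T = phi n p'"
  have tT: "tabv n T" and lT: "\<forall>q<n. length (T ! q) = p' (Suc q) (Suc q)" using phi_tab[OF P] T_def by auto
  have rT: "rv T" and lenT: "length T = n" and eT: "\<forall>r\<in>set T. \<forall>a\<in>set r. a \<le> n" using tT unfolding tabv_def by auto
  have sx: "sorted_wrt (<) xs" unfolding xs_def by (rule sorted_wrt_filter) (rule sorted_wrt_upt)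
  have xsn: "set xs \<subseteq> {1..n}" unfolding xs_def by auto
  have bx: "\<forall>x\<in>set xs. 0 < x \<and> x \<le> length T" using xsn lenT by auto
  note GF1 = GF[OF rT sx bx]
  have UG: "U = foldl row_ins T xs" using U_def T_def by simp
  have rU: "rv U" and lU: "length U = n" using GF1 UG lenT by auto
  have eU: "\<forall>r\<in>set U. \<forall>a\<in>set r. a \<le> n"
  proof (intro ballI)
    fix r a assume "r \<in> set U" "a \<in> set r"
    then have "a \<in> \<Union>(set ` set T) \<union> set xs" using GF1 UG by blast
    then show "a \<le> n" using eT xsn by auto
  qed
  have tU: "tabv n U" using rU lU eU unfolding tabv_def by simp
  note PP = phi_psi[OF tU]
  have lam: "map (\<lambda>a. 2 * (a div 2)) (map length U) = map length T"
  proof (rule nth_equalityI)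
    show "length (map (\<lambda>a. 2 * (a div 2)) (map length U)) = length (map length T)" using lU lenT by simp
    fix i assume "i < length (map (\<lambda>a. 2 * (a div 2)) (map length U))"
    then have i: "i < n" using lU by simp
    have e: "even (length (T ! i))" using lT ev i by auto
    have "length (U ! i) = length (T ! i) \<or> length (U ! i) = Suc (length (T ! i))" using GF1 UG i lenT by auto
    then have "2 * (length (U ! i) div 2) = length (T ! i)" using e by (auto elim: evenE)
    then show "map (\<lambda>a. 2 * (a div 2)) (map length U) ! i = map length T ! i" using i lU lenT by simp
  qed
  have uG: "unG U (map length T) = (T, xs)" using unG_G[OF rT sx bx] UG by simp
  have "unG (phi n (psi n U)) (map (\<lambda>a. 2 * (a div 2)) (map length (phi n (psi n U)))) = (T, xs)"
    using PP lam uG by simp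
  note F = F_map_eq[OF _ this] PP tU
  have "ind xs = t"
  proof
    fix i
    have "t i \<in> {0, 1}" "t i \<noteq> 0 \<longrightarrow> 1 \<le> i \<and> i \<le> n" using t unfolding binvecs_def by auto
    then show "ind xs i = t i" unfolding ind_def xs_def by auto
  qed
  then have Ph: "Phi n (psi n U) = (p', t)"
    using F phi_inv_eq[OF tT] psi_phi[OF P] T_def unfolding Phi_def ind_def by simp
  have h: "length (U ! 0) = p' 1 1 + (if grows (phi n p' ! 0) xs then 1 else 0)"
  proof -
    have "T \<noteq> []" using lenT n by auto
    then have "length (hd U) = length (hd T) + (if grows (hd T) xs then 1 else 0)" using GF1 UG by blast
    moreover have "hd U = U ! 0" "hd T = T ! 0" using lU lenT n \<open>T \<noteq> []\<close> by (auto simp: hd_conv_nth)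
    ultimately show ?thesis using phi0_len[OF n, of p'] T_def by simp
  qed
  have d: "psi n U 1 1 = length (U ! 0)" using psi_diag[OF tU, of 1] n by simp
  show ?thesis using tU PP Ph h d sx xsn by simp
qed

lemma first_row:
  assumes T: "tabv n T" and n: "0 < n" and sx: "sorted_wrt (<) xs" and xsn: "set xs \<subseteq> {1..n}"
  shows "length (foldl row_ins T xs ! 0) = length (T ! 0) + (if grows (T ! 0) xs then 1 else 0)"
proof -
  have rT: "rv T" and lenT: "length T = n" using T unfolding tabv_def by auto
  have bx: "\<forall>x\<in>set xs. 0 < x \<and> x \<le> length T" using xsn lenT by auto
  note GF1 = GF[OF rT sx bx]
  have ne: "T \<noteq> []" using lenT n by auto
  then have "length (hd (foldl row_ins T xs)) = length (hd T) + (if grows (hd T) xs then 1 else 0)" using GF1 by blast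
  moreover have "foldl row_ins T xs \<noteq> []" using foldl_row_ins_ne[OF ne] by simp
  ultimately show ?thesis using ne by (simp add: hd_conv_nth)
qed

lemma hd_le_sorted: "sorted_wrt (<) xs \<Longrightarrow> x \<in> set xs \<Longrightarrow> hd xs \<le> (x::nat)"
  by (cases xs) auto

lemma Psi_Phi:
  assumes n: "0 < n" and P: "p \<in> SPP_all n"
  shows "(case Phi n p of (p', t) \<Rightarrow> psi n (foldl row_ins (phi n p') (filter (\<lambda>i. t i = 1) [1..<n+1]))) = p"
proof -
  obtain T xs where f: "Phi n p = (psi n T, ind xs)" "tabv n T" "sorted_wrt (<) xs" "set xs \<subseteq> {1..n}"
    "foldl row_ins T xs = phi n p" using fwd[OF n P] by metis
  have "phi n (psi n T) = T" using phi_psi[OF f(2)] by simp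
  then show ?thesis using f filter_ind[OF f(3,4)] psi_phi[OF P] by simp
qed

lemma Phi_in:
  assumes n: "0 < n" and P: "p \<in> SPP n (2 * m + 1)"
  shows "Phi n p \<in> eSPP n m \<times> binvecs n"
proof -
  have P': "p \<in> SPP_all n" "p 1 1 \<le> 2 * m + 1" using P unfolding SPP_def by auto
  obtain T xs where f: "Phi n p = (psi n T, ind xs)" "tabv n T"
    "map length T = map (\<lambda>a. 2 * (a div 2)) (map length (phi n p))" "sorted_wrt (<) xs" "set xs \<subseteq> {1..n}"
    using fwd[OF n P'(1)] by metis
  have lenT: "length T = n" using f(2) unfolding tabv_def by simp
  have lp: "length (phi n p) = n" by (simp add: length_phi)
  have lk: "\<And>k. k < n \<Longrightarrow> length (T ! k) = 2 * (length (phi n p ! k) div 2)"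
    using f(3) lenT lp by (metis length_map nth_map)
  have S: "psi n T \<in> SPP_all n" using phi_psi[OF f(2)] by simp
  have d: "\<And>i. 1 \<le> i \<Longrightarrow> i \<le> n \<Longrightarrow> psi n T i i = 2 * (length (phi n p ! (i - 1)) div 2)"
    using psi_diag[OF f(2)] lk by simp
  have "psi n T 1 1 = 2 * (p 1 1 div 2)" using d[of 1] n phi0_len[OF n, of p] by simp
  also have "\<dots> \<le> 2 * m" using P'(2) by presburger
  finally have b: "psi n T 1 1 \<le> 2 * m" .
  have e: "\<forall>i\<in>{1..n}. even (psi n T i i)" using d by auto
  have "psi n T \<in> eSPP n m" using S b e unfolding eSPP_def SPP_def by simp
  moreover have "ind xs \<in> binvecs n" using f(5) unfolding binvecs_def ind_def by auto
  ultimately show ?thesis using f(1) by simp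
qed

lemma Phi_in2:
  assumes n: "0 < n" and P: "p \<in> SPP n (2 * m)"
  shows "\<forall>j\<in>{1..n}. j \<notin> S_set n m (fst (Phi n p)) \<longrightarrow> snd (Phi n p) j = 0"
proof -
  have P': "p \<in> SPP_all n" "p 1 1 \<le> 2 * m" using P unfolding SPP_def by auto
  then have P2: "p \<in> SPP n (2 * m + 1)" unfolding SPP_def by simp
  obtain T xs where f: "Phi n p = (psi n T, ind xs)" "tabv n T" "sorted_wrt (<) xs" "set xs \<subseteq> {1..n}"
    "foldl row_ins T xs = phi n p" using fwd[OF n P'(1)] by metis
  define p' where "p' = psi n T"
  have S: "p' \<in> SPP_all n" "phi n p' = T" using phi_psi[OF f(2)] p'_def by auto
  have b: "p' 1 1 \<le> 2 * m" using Phi_in[OF n P2] f(1) p'_def unfolding eSPP_def SPP_def by auto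
  show ?thesis
  proof (intro ballI impI)
    fix j assume j: "j \<in> {1..n}" "j \<notin> S_set n m (fst (Phi n p))"
    then have pj: "p' 1 j = 2 * m" using f(1) p'_def unfolding S_set_def by auto
    show "snd (Phi n p) j = 0"
    proof (rule ccontr)
      assume "snd (Phi n p) j \<noteq> 0"
      then have jx: "j \<in> set xs" using f(1) unfolding ind_def by (auto split: if_splits)
      have "p' 1 j \<le> p' 1 1" using row_mono[OF S(1), of 1 1 j] j by simp
      then have p11: "p' 1 1 = 2 * m" using pj b by simp
      have r0: "T ! 0 = map (\<lambda>jj. card (fset n p' 1 jj)) [1..<p' 1 1 + 1]" using phi_nth[OF n, of p'] S(2) by simp
      have "grows (T ! 0) xs"
        unfolding grows_def
      proof (intro conjI ballI)
        show "xs \<noteq> []" using jx by auto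
        fix a assume "a \<in> set (T ! 0)"
        then have "a \<in> (\<lambda>jj. card (fset n p' 1 jj)) ` {1..<2 * m + 1}" using r0 p11 by (simp del: upt_Suc)
        then obtain jj where jj: "1 \<le> jj" "jj \<le> 2 * m" "a = card (fset n p' 1 jj)" by auto
        have "j < 1 + card (fset n p' 1 jj)" using fset_iff[OF S(1), of 1 j jj] j jj pj by simp
        then have "j \<le> a" using jj by simp
        then show "hd xs \<le> a" using hd_le_sorted[OF f(3) jx] by simp
      qed
      then have "length (phi n p ! 0) = length (T ! 0) + 1" using first_row[OF f(2) n f(3,4)] f(5) by simp
      moreover have "length (T ! 0) = 2 * m" using phi0_len[OF n, of p'] S(2) p11 by simp
      moreover have "length (phi n p ! 0) = p 1 1" using phi0_len[OF n] by simp
      ultimately show False using P'(2) by simp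
    qed
  qed
qed

lemma Psi_in:
  assumes n: "0 < n" and P: "p' \<in> eSPP n m" and t: "t \<in> binvecs n"
  defines "U \<equiv> foldl row_ins (phi n p') (filter (\<lambda>i. t i = 1) [1..<n+1])"
  shows "Phi n (psi n U) = (p', t) \<and> psi n U \<in> SPP n (2 * m + 1)
     \<and> ((\<forall>j\<in>{1..n}. j \<notin> S_set n m p' \<longrightarrow> t j = 0) \<longrightarrow> psi n U \<in> SPP n (2 * m))"
proof -
  have P': "p' \<in> SPP_all n" "p' 1 1 \<le> 2 * m" "\<forall>i\<in>{1..n}. even (p' i i)"
    using P unfolding eSPP_def SPP_def by auto
  define xs where "xs = filter (\<lambda>i. t i = 1) [1..<n+1]"
  note B = bwd[OF n P'(1) P'(3) t, folded xs_def, folded U_def[folded xs_def]]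
  have U11: "psi n U 1 1 = p' 1 1 + (if grows (phi n p' ! 0) xs then 1 else 0)" using B by simp
  have S1: "psi n U \<in> SPP n (2 * m + 1)" using B U11 P'(2) unfolding SPP_def by simp
  have S2: "psi n U \<in> SPP n (2 * m)" if cond: "\<forall>j\<in>{1..n}. j \<notin> S_set n m p' \<longrightarrow> t j = 0"
  proof (cases "grows (phi n p' ! 0) xs")
    case False then show ?thesis using B U11 P'(2) unfolding SPP_def by simp
  next
    case True
    have "p' 1 1 \<noteq> 2 * m"
    proof
      assume p11: "p' 1 1 = 2 * m"
      have xne: "xs \<noteq> []" using True unfolding grows_def by simp
      define x where "x = hd xs"
      have xin: "x \<in> set xs" using xne x_def by simp
      then have tx: "t x = 1" "1 \<le> x" "x \<le> n" unfolding xs_def by auto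
      then have "x \<in> S_set n m p'" using cond by force
      then have px: "p' 1 x \<noteq> 2 * m" unfolding S_set_def by simp
      have pxl: "p' 1 x \<le> p' 1 1" using row_mono[OF P'(1), of 1 1 x] tx by simp
      show False
      proof (cases "m = 0")
        case True then show False using px pxl p11 by simp
      next
        case False
        have r0: "phi n p' ! 0 = map (\<lambda>jj. card (fset n p' 1 jj)) [1..<p' 1 1 + 1]" using phi_nth[OF n, of p'] by simp
        have "card (fset n p' 1 (2 * m)) \<in> set (phi n p' ! 0)" using r0 p11 False by (simp del: upt_Suc)
        then have "x \<le> card (fset n p' 1 (2 * m))" using True x_def unfolding grows_def by blast
        then have "2 * m \<le> p' 1 x" using fset_iff[OF P'(1), of 1 x "2 * m"] tx by simp
        then show False using px pxl p11 by simp
      qed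
    qed
    then show ?thesis using B U11 P'(2) unfolding SPP_def by simp
  qed
  show ?thesis using B S1 S2 by simp
qed

theorem mainTheorem5:
  fixes n m :: nat
  assumes "0 < n"
  shows "bij_betw (Phi n) (SPP n (2 * m + 1)) (eSPP n m \<times> binvecs n) \<and>
         bij_betw (Phi n) (SPP n (2 * m))
           {(p', t) \<in> eSPP n m \<times> binvecs n. \<forall>j \<in> {1..n}. j \<notin> S_set n m p' \<longrightarrow> t j = 0}"
proof -
  define Psi where "Psi = (\<lambda>(p', t :: nat \<Rightarrow> nat). psi n (foldl row_ins (phi n p') (filter (\<lambda>i. t i = 1) [1..<n+1])))"
  have L: "\<And>p M. p \<in> SPP n M \<Longrightarrow> Psi (Phi n p) = p"
    using Psi_Phi[OF assms] unfolding Psi_def SPP_def by auto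
  have R: "\<And>p' t. p' \<in> eSPP n m \<Longrightarrow> t \<in> binvecs n \<Longrightarrow> Phi n (Psi (p', t)) = (p', t) \<and> Psi (p', t) \<in> SPP n (2 * m + 1)
     \<and> ((\<forall>j\<in>{1..n}. j \<notin> S_set n m p' \<longrightarrow> t j = 0) \<longrightarrow> Psi (p', t) \<in> SPP n (2 * m))"
    using Psi_in[OF assms] unfolding Psi_def by simp
  have b1: "bij_betw (Phi n) (SPP n (2 * m + 1)) (eSPP n m \<times> binvecs n)"
  proof (rule bij_betw_byWitness[where f' = Psi])
    show "\<forall>a\<in>SPP n (2 * m + 1). Psi (Phi n a) = a" using L by blast
    show "\<forall>a'\<in>eSPP n m \<times> binvecs n. Phi n (Psi a') = a'" using R by auto
    show "Phi n ` SPP n (2 * m + 1) \<subseteq> eSPP n m \<times> binvecs n" using Phi_in[OF assms, of _ m] by blast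
    show "Psi ` (eSPP n m \<times> binvecs n) \<subseteq> SPP n (2 * m + 1)" using R by auto
  qed
  have sub: "SPP n (2 * m) \<subseteq> SPP n (2 * m + 1)" unfolding SPP_def by auto
  have b2: "bij_betw (Phi n) (SPP n (2 * m))
           {(p', t) \<in> eSPP n m \<times> binvecs n. \<forall>j \<in> {1..n}. j \<notin> S_set n m p' \<longrightarrow> t j = 0}"
  proof (rule bij_betw_byWitness[where f' = Psi])
    show "\<forall>a\<in>SPP n (2 * m). Psi (Phi n a) = a" using L by blast
    show "\<forall>a'\<in>{(p', t) \<in> eSPP n m \<times> binvecs n. \<forall>j \<in> {1..n}. j \<notin> S_set n m p' \<longrightarrow> t j = 0}. Phi n (Psi a') = a'"
      using R by auto
    show "Phi n ` SPP n (2 * m) \<subseteq> {(p', t) \<in> eSPP n m \<times> binvecs n. \<forall>j \<in> {1..n}. j \<notin> S_set n m p' \<longrightarrow> t j = 0}"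
    proof
      fix y assume "y \<in> Phi n ` SPP n (2 * m)"
      then obtain p where p: "p \<in> SPP n (2 * m)" "y = Phi n p" by auto
      have "Phi n p \<in> eSPP n m \<times> binvecs n" using Phi_in[OF assms] p sub by auto
      moreover have "\<forall>j\<in>{1..n}. j \<notin> S_set n m (fst (Phi n p)) \<longrightarrow> snd (Phi n p) j = 0" using Phi_in2[OF assms p(1)] .
      ultimately show "y \<in> {(p', t) \<in> eSPP n m \<times> binvecs n. \<forall>j \<in> {1..n}. j \<notin> S_set n m p' \<longrightarrow> t j = 0}"
        using p by (cases "Phi n p") auto
    qed
    show "Psi ` {(p', t) \<in> eSPP n m \<times> binvecs n. \<forall>j \<in> {1..n}. j \<notin> S_set n m p' \<longrightarrow> t j = 0} \<subseteq> SPP n (2 * m)"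
      using R by auto
  qed
  show ?thesis using b1 b2 by simp
qed

end
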